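(* Let $H=\Bbbk^G{}^\tau\#_\sigma\Bbbk F$ be the Hopf algebra described in the context and for $f\in F$ let $C_f=\mathrm{span}\{p_g\#(g'\triangleright f)\mid g,g'\in G\}$. (1) For every $f\in F$, $C_f$ is a cosemisimple subcoalgebra of $H$; moreover $C_{1_F}$ is a (cosemisimple) Hopf subalgebra of $H$ and $C_{1_F}\cong\Bbbk^G$ as Hopf algebras via $p_g\#1_F\mapsto p_g$. (2) If $G_f=\{1_G\}$, then $C_f$ is a simple subcoalgebra of $H$, and in this case $S(C_f)=C_f$ if and only if $G_{f,f^{-1}}\neq\emptyset$.
   Context: Standing setup: $\Bbbk$ is an algebraically closed field of characteristic $0$, $F$ a group (possibly infinite), $G$ a finite group, and $(F,G,\triangleleft,\triangleright)$ a matched pair: $\triangleright:G\times F\to F$ a left action of $G$ on the set $F$, $\triangleleft:G\times F\to G$ a right action of $F$ on the set $G$, with $g\triangleright(ff')=(g\triangleright f)((g\triangleleft f)\triangleright f')$ and $(gg')\triangleleft f=(g\triangleleft(g'\triangleright f))(g'\triangleleft f)$. Maps $\sigma:G\times F\times F\to\Bbbk^\times$, $(g,f,f')\mapsto\sigma(g;f,f')$, and $\tau:G\times G\times F\to\Bbbk^\times$, $(g,g',f)\mapsto\tau(g,g';f)$, satisfy: $\sigma(g;1_F,f)=\sigma(g;f,1_F)=\sigma(1_G;f,f')=1$; $\sigma(g\triangleleft f;f',f'')\sigma(g;f,f'f'')=\sigma(g;f,f')\sigma(g;ff',f'')$; $\tau(1_G,g;f)=\tau(g,1_G;f)=\tau(g,g';1_F)=1$;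 $\tau(g,g';g''\triangleright f)\tau(gg',g'';f)=\tau(g,g'g'';f)\tau(g',g'';f)$; and $\sigma(gg';f,f')\tau(g,g';ff')=\sigma(g;g'\triangleright f,(g'\triangleleft f)\triangleright f')\sigma(g';f,f')\tau(g,g';f)\tau(g\triangleleft(g'\triangleright f),g'\triangleleft f;f')$. $H$ has basis $\{p_g\#f\}$ ($\{p_g\}$ the dual basis of $\Bbbk^G$), unit $\sum_g p_g\#1_F$, product $(p_g\#f)(p_{g'}\#f')=\delta_{g\triangleleft f,g'}\sigma(g;f,f')p_g\#ff'$, coproduct $\Delta(p_g\#f)=\sum_{x\in G}\tau(gx^{-1},x;f)\,p_{gx^{-1}}\#(x\triangleright f)\otimes p_x\#f$, counit $\varepsilon(p_g\#f)=\delta_{g,1_G}$, antipode $S(p_g\#f)=\sigma(g^{-1};g\triangleright f,(g\triangleright f)^{-1})^{-1}\tau(g^{-1},g;f)^{-1}p_{(g\triangleleft f)^{-1}}\#(g\triangleright f)^{-1}$. Notation: $G_f=\{g\in G\mid g\triangleright f=f\}$ and $G_{f,f^{-1}}=\{g\in G\mid g\triangleright f=f^{-1}\}$. *)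

theory Defs
  imports "HOL-Algebra.Group" "HOL-Computational_Algebra.Polynomial"
begin

locale matched_pair =
  F: group F + G: group G
  for F :: "'f monoid" and G :: "'g monoid"
  + fixes lact :: "'g \<Rightarrow> 'f \<Rightarrow> 'f"
    and ract :: "'g \<Rightarrow> 'f \<Rightarrow> 'g"
    and \<sigma> :: "'g \<Rightarrow> 'f \<Rightarrow> 'f \<Rightarrow> 'k::field"
    and \<tau> :: "'g \<Rightarrow> 'g \<Rightarrow> 'f \<Rightarrow> 'k"
  assumes G_finite: "finite (carrier G)"
    and lact_closed: "\<lbrakk>g \<in> carrier G; f \<in> carrier F\<rbrakk> \<Longrightarrow> lact g f \<in> carrier F"
    and ract_closed: "\<lbrakk>g \<in> carrier G; f \<in> carrier F\<rbrakk> \<Longrightarrow> ract g f \<in> carrier G"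
    and lact_one: "f \<in> carrier F \<Longrightarrow> lact \<one>\<^bsub>G\<^esub> f = f"
    and lact_mult: "\<lbrakk>g \<in> carrier G; g' \<in> carrier G; f \<in> carrier F\<rbrakk> \<Longrightarrow>
        lact (g \<otimes>\<^bsub>G\<^esub> g') f = lact g (lact g' f)"
    and ract_one: "g \<in> carrier G \<Longrightarrow> ract g \<one>\<^bsub>F\<^esub> = g"
    and ract_mult: "\<lbrakk>g \<in> carrier G; f \<in> carrier F; f' \<in> carrier F\<rbrakk> \<Longrightarrow>
        ract g (f \<otimes>\<^bsub>F\<^esub> f') = ract (ract g f) f'"
    and mp_lact: "\<lbrakk>g \<in> carrier G; f \<in> carrier F; f' \<in> carrier F\<rbrakk> \<Longrightarrow>
        lact g (f \<otimes>\<^bsub>F\<^esub> f') = lact g f \<otimes>\<^bsub>F\<^esub> lact (ract g f) f'"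
    and mp_ract: "\<lbrakk>g \<in> carrier G; g' \<in> carrier G; f \<in> carrier F\<rbrakk> \<Longrightarrow>
        ract (g \<otimes>\<^bsub>G\<^esub> g') f = ract g (lact g' f) \<otimes>\<^bsub>G\<^esub> ract g' f"
    and sigma_nonzero: "\<lbrakk>g \<in> carrier G; f \<in> carrier F; f' \<in> carrier F\<rbrakk> \<Longrightarrow> \<sigma> g f f' \<noteq> 0"
    and tau_nonzero: "\<lbrakk>g \<in> carrier G; g' \<in> carrier G; f \<in> carrier F\<rbrakk> \<Longrightarrow> \<tau> g g' f \<noteq> 0"
    and sigma_norm: "\<lbrakk>g \<in> carrier G; f \<in> carrier F; f' \<in> carrier F\<rbrakk> \<Longrightarrow>
        \<sigma> g \<one>\<^bsub>F\<^esub> f = 1 \<and> \<sigma> g f \<one>\<^bsub>F\<^esub> = 1 \<and> \<sigma> \<one>\<^bsub>G\<^esub> f f' = 1"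
    and sigma_cocycle: "\<lbrakk>g \<in> carrier G; f \<in> carrier F; f' \<in> carrier F; f'' \<in> carrier F\<rbrakk> \<Longrightarrow>
        \<sigma> (ract g f) f' f'' * \<sigma> g f (f' \<otimes>\<^bsub>F\<^esub> f'')
          = \<sigma> g f f' * \<sigma> g (f \<otimes>\<^bsub>F\<^esub> f') f''"
    and tau_norm: "\<lbrakk>g \<in> carrier G; g' \<in> carrier G; f \<in> carrier F\<rbrakk> \<Longrightarrow>
        \<tau> \<one>\<^bsub>G\<^esub> g f = 1 \<and> \<tau> g \<one>\<^bsub>G\<^esub> f = 1 \<and> \<tau> g g' \<one>\<^bsub>F\<^esub> = 1"
    and tau_cocycle: "\<lbrakk>g \<in> carrier G; g' \<in> carrier G; g'' \<in> carrier G; f \<in> carrier F\<rbrakk> \<Longrightarrow>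
        \<tau> g g' (lact g'' f) * \<tau> (g \<otimes>\<^bsub>G\<^esub> g') g'' f
          = \<tau> g (g' \<otimes>\<^bsub>G\<^esub> g'') f * \<tau> g' g'' f"
    and sigma_tau_compat: "\<lbrakk>g \<in> carrier G; g' \<in> carrier G; f \<in> carrier F; f' \<in> carrier F\<rbrakk> \<Longrightarrow>
        \<sigma> (g \<otimes>\<^bsub>G\<^esub> g') f f' * \<tau> g g' (f \<otimes>\<^bsub>F\<^esub> f')
          = \<sigma> g (lact g' f) (lact (ract g' f) f') * \<sigma> g' f f' * \<tau> g g' f
            * \<tau> (ract g (lact g' f)) (ract g' f) f'"

section \<open>Finitely supported functions as vector spaces with a distinguished basis\<close>

definition supp :: "('i \<Rightarrow> 'k::zero) \<Rightarrow> 'i set" where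
  "supp h = {i. h i \<noteq> 0}"

definition fin_fun :: "'i set \<Rightarrow> ('i \<Rightarrow> 'k::zero) set" where
  "fin_fun I = {h. finite (supp h) \<and> supp h \<subseteq> I}"

definition bvec :: "'i \<Rightarrow> 'i \<Rightarrow> 'k::{zero,one}" where
  "bvec i = (\<lambda>j. if j = i then 1 else 0)"

definition lin_ext :: "('i \<Rightarrow> 'j \<Rightarrow> 'k::comm_ring_1) \<Rightarrow> ('i \<Rightarrow> 'k) \<Rightarrow> 'j \<Rightarrow> 'k" where
  "lin_ext \<phi> h = (\<lambda>j. \<Sum>i\<in>supp h. h i * \<phi> i j)"

definition bilin_ext :: "('i \<Rightarrow> 'i2 \<Rightarrow> 'j \<Rightarrow> 'k::comm_ring_1) \<Rightarrow> ('i \<Rightarrow> 'k) \<Rightarrow> ('i2 \<Rightarrow> 'k) \<Rightarrow> 'j \<Rightarrow> 'k" where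
  "bilin_ext \<mu> x y = (\<lambda>j. \<Sum>i\<in>supp x. \<Sum>i2\<in>supp y. x i * y i2 * \<mu> i i2 j)"

text \<open>Tensor product of vectors: basis of the tensor product is indexed by pairs.\<close>
definition tensor :: "('i \<Rightarrow> 'k::times) \<Rightarrow> ('j \<Rightarrow> 'k) \<Rightarrow> 'i \<times> 'j \<Rightarrow> 'k" where
  "tensor x y = (\<lambda>(i, j). x i * y j)"

definition tensor_map :: "(('i \<Rightarrow> 'k::comm_ring_1) \<Rightarrow> 'j \<Rightarrow> 'k) \<Rightarrow> (('i2 \<Rightarrow> 'k) \<Rightarrow> 'j2 \<Rightarrow> 'k)
    \<Rightarrow> ('i \<times> 'i2 \<Rightarrow> 'k) \<Rightarrow> 'j \<times> 'j2 \<Rightarrow> 'k" where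
  "tensor_map \<phi> \<psi> = lin_ext (\<lambda>(i, i2). tensor (\<phi> (bvec i)) (\<psi> (bvec i2)))"

definition lspan :: "('i \<Rightarrow> 'k::comm_ring_1) set \<Rightarrow> ('i \<Rightarrow> 'k) set" where
  "lspan V = {v. \<exists>A c. finite A \<and> A \<subseteq> V \<and> v = (\<lambda>j. \<Sum>a\<in>A. c a * a j)}"

definition lsubspace :: "('i \<Rightarrow> 'k::comm_ring_1) set \<Rightarrow> bool" where
  "lsubspace D \<longleftrightarrow> (\<lambda>_. 0) \<in> D \<and> (\<forall>x\<in>D. \<forall>y\<in>D. (\<lambda>j. x j + y j) \<in> D)
      \<and> (\<forall>c x. x \<in> D \<longrightarrow> (\<lambda>j. c * x j) \<in> D)"

definition linear_on :: "('i \<Rightarrow> 'k::comm_ring_1) set \<Rightarrow> (('i \<Rightarrow> 'k) \<Rightarrow> 'j \<Rightarrow> 'k) \<Rightarrow> bool" where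
  "linear_on D \<phi> \<longleftrightarrow> (\<forall>x\<in>D. \<forall>y\<in>D. \<phi> (\<lambda>j. x j + y j) = (\<lambda>j. \<phi> x j + \<phi> y j))
      \<and> (\<forall>c. \<forall>x\<in>D. \<phi> (\<lambda>j. c * x j) = (\<lambda>j. c * \<phi> x j))"

definition subcoalgebra ::
  "('i \<Rightarrow> 'k::comm_ring_1) set \<Rightarrow> (('i \<Rightarrow> 'k) \<Rightarrow> 'i \<times> 'i \<Rightarrow> 'k) \<Rightarrow> ('i \<Rightarrow> 'k) set \<Rightarrow> bool" where
  "subcoalgebra V \<Delta> D \<longleftrightarrow> D \<subseteq> V \<and> lsubspace D
     \<and> (\<forall>d\<in>D. \<Delta> d \<in> lspan {tensor x y | x y. x \<in> D \<and> y \<in> D})"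

definition simple_subcoalgebra ::
  "('i \<Rightarrow> 'k::comm_ring_1) set \<Rightarrow> (('i \<Rightarrow> 'k) \<Rightarrow> 'i \<times> 'i \<Rightarrow> 'k) \<Rightarrow> ('i \<Rightarrow> 'k) set \<Rightarrow> bool" where
  "simple_subcoalgebra V \<Delta> D \<longleftrightarrow> subcoalgebra V \<Delta> D \<and> D \<noteq> {\<lambda>_. 0}
     \<and> (\<forall>E. subcoalgebra V \<Delta> E \<and> E \<subseteq> D \<longrightarrow> E = {\<lambda>_. 0} \<or> E = D)"

definition cosemisimple_subcoalgebra ::
  "('i \<Rightarrow> 'k::comm_ring_1) set \<Rightarrow> (('i \<Rightarrow> 'k) \<Rightarrow> 'i \<times> 'i \<Rightarrow> 'k) \<Rightarrow> ('i \<Rightarrow> 'k) set \<Rightarrow> bool" where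
  "cosemisimple_subcoalgebra V \<Delta> D \<longleftrightarrow> subcoalgebra V \<Delta> D
     \<and> (\<exists>\<S>. (\<forall>S\<in>\<S>. simple_subcoalgebra V \<Delta> S) \<and> D = lspan (\<Union>\<S>)
          \<and> (\<forall>S\<in>\<S>. S \<inter> lspan (\<Union>(\<S> - {S})) = {\<lambda>_. 0}))"

section \<open>The Hopf algebra H = k^G {}^\<tau>#_\<sigma> kF; basis p_g # f is bvec (g, f)\<close>

definition Hspace :: "'f monoid \<Rightarrow> 'g monoid \<Rightarrow> ('g \<times> 'f \<Rightarrow> 'k::comm_ring_1) set" where
  "Hspace F G = fin_fun (carrier G \<times> carrier F)"

definition Hmult :: "'f monoid \<Rightarrow> 'g monoid \<Rightarrow> ('g \<Rightarrow> 'f \<Rightarrow> 'g) \<Rightarrow> ('g \<Rightarrow> 'f \<Rightarrow> 'f \<Rightarrow> 'k::field)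
    \<Rightarrow> ('g \<times> 'f \<Rightarrow> 'k) \<Rightarrow> ('g \<times> 'f \<Rightarrow> 'k) \<Rightarrow> 'g \<times> 'f \<Rightarrow> 'k" where
  "Hmult F G ract \<sigma> = bilin_ext (\<lambda>(g, f) (g', f') j.
      (if ract g f = g' then \<sigma> g f f' else 0) * bvec (g, f \<otimes>\<^bsub>F\<^esub> f') j)"

definition Hunit :: "'f monoid \<Rightarrow> 'g monoid \<Rightarrow> 'g \<times> 'f \<Rightarrow> 'k::comm_ring_1" where
  "Hunit F G = (\<lambda>j. \<Sum>g\<in>carrier G. bvec (g, \<one>\<^bsub>F\<^esub>) j)"

definition Hcomul :: "'f monoid \<Rightarrow> 'g monoid \<Rightarrow> ('g \<Rightarrow> 'f \<Rightarrow> 'f) \<Rightarrow> ('g \<Rightarrow> 'g \<Rightarrow> 'f \<Rightarrow> 'k::field)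
    \<Rightarrow> ('g \<times> 'f \<Rightarrow> 'k) \<Rightarrow> ('g \<times> 'f) \<times> ('g \<times> 'f) \<Rightarrow> 'k" where
  "Hcomul F G lact \<tau> = lin_ext (\<lambda>(g, f) t. \<Sum>x\<in>carrier G.
      \<tau> (g \<otimes>\<^bsub>G\<^esub> inv\<^bsub>G\<^esub> x) x f
        * tensor (bvec (g \<otimes>\<^bsub>G\<^esub> inv\<^bsub>G\<^esub> x, lact x f)) (bvec (x, f)) t)"

definition Hcounit :: "'f monoid \<Rightarrow> 'g monoid \<Rightarrow> ('g \<times> 'f \<Rightarrow> 'k::comm_ring_1) \<Rightarrow> 'k" where
  "Hcounit F G h = (\<Sum>i\<in>supp h. h i * (if fst i = \<one>\<^bsub>G\<^esub> then 1 else 0))"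

definition Hantipode :: "'f monoid \<Rightarrow> 'g monoid \<Rightarrow> ('g \<Rightarrow> 'f \<Rightarrow> 'f) \<Rightarrow> ('g \<Rightarrow> 'f \<Rightarrow> 'g)
    \<Rightarrow> ('g \<Rightarrow> 'f \<Rightarrow> 'f \<Rightarrow> 'k::field) \<Rightarrow> ('g \<Rightarrow> 'g \<Rightarrow> 'f \<Rightarrow> 'k)
    \<Rightarrow> ('g \<times> 'f \<Rightarrow> 'k) \<Rightarrow> 'g \<times> 'f \<Rightarrow> 'k" where
  "Hantipode F G lact ract \<sigma> \<tau> = lin_ext (\<lambda>(g, f) j.
      inverse (\<sigma> (inv\<^bsub>G\<^esub> g) (lact g f) (inv\<^bsub>F\<^esub> (lact g f)))
      * inverse (\<tau> (inv\<^bsub>G\<^esub> g) g f)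
      * bvec (inv\<^bsub>G\<^esub> (ract g f), inv\<^bsub>F\<^esub> (lact g f)) j)"

definition Csub :: "'f monoid \<Rightarrow> 'g monoid \<Rightarrow> ('g \<Rightarrow> 'f \<Rightarrow> 'f) \<Rightarrow> 'f \<Rightarrow> ('g \<times> 'f \<Rightarrow> 'k::comm_ring_1) set" where
  "Csub F G lact f = lspan {bvec (g, lact g' f) | g g'. g \<in> carrier G \<and> g' \<in> carrier G}"

definition stabilizer :: "'g monoid \<Rightarrow> ('g \<Rightarrow> 'f \<Rightarrow> 'f) \<Rightarrow> 'f \<Rightarrow> 'g set" where
  "stabilizer G lact f = {g \<in> carrier G. lact g f = f}"

definition inv_stabilizer :: "'f monoid \<Rightarrow> 'g monoid \<Rightarrow> ('g \<Rightarrow> 'f \<Rightarrow> 'f) \<Rightarrow> 'f \<Rightarrow> 'g set" where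
  "inv_stabilizer F G lact f = {g \<in> carrier G. lact g f = inv\<^bsub>F\<^esub> f}"

definition Hopf_subalgebra :: "'f monoid \<Rightarrow> 'g monoid \<Rightarrow> ('g \<Rightarrow> 'f \<Rightarrow> 'f) \<Rightarrow> ('g \<Rightarrow> 'f \<Rightarrow> 'g)
    \<Rightarrow> ('g \<Rightarrow> 'f \<Rightarrow> 'f \<Rightarrow> 'k::field) \<Rightarrow> ('g \<Rightarrow> 'g \<Rightarrow> 'f \<Rightarrow> 'k) \<Rightarrow> ('g \<times> 'f \<Rightarrow> 'k) set \<Rightarrow> bool" where
  "Hopf_subalgebra F G lact ract \<sigma> \<tau> D \<longleftrightarrow>
     subcoalgebra (Hspace F G) (Hcomul F G lact \<tau>) D
     \<and> Hunit F G \<in> D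
     \<and> (\<forall>x\<in>D. \<forall>y\<in>D. Hmult F G ract \<sigma> x y \<in> D)
     \<and> (\<forall>x\<in>D. Hantipode F G lact ract \<sigma> \<tau> x \<in> D)"

section \<open>The dual group Hopf algebra k^G; basis p_g is bvec g\<close>

definition kGspace :: "'g monoid \<Rightarrow> ('g \<Rightarrow> 'k::comm_ring_1) set" where
  "kGspace G = fin_fun (carrier G)"

definition kGmult :: "('g \<Rightarrow> 'k::comm_ring_1) \<Rightarrow> ('g \<Rightarrow> 'k) \<Rightarrow> 'g \<Rightarrow> 'k" where
  "kGmult = bilin_ext (\<lambda>g g' j. (if g = g' then 1 else 0) * bvec g j)"

definition kGunit :: "'g monoid \<Rightarrow> 'g \<Rightarrow> 'k::comm_ring_1" where
  "kGunit G = (\<lambda>j. \<Sum>g\<in>carrier G. bvec g j)"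

definition kGcomul :: "'g monoid \<Rightarrow> ('g \<Rightarrow> 'k::comm_ring_1) \<Rightarrow> 'g \<times> 'g \<Rightarrow> 'k" where
  "kGcomul G = lin_ext (\<lambda>g t. \<Sum>x\<in>carrier G. tensor (bvec (g \<otimes>\<^bsub>G\<^esub> inv\<^bsub>G\<^esub> x)) (bvec x) t)"

definition kGcounit :: "'g monoid \<Rightarrow> ('g \<Rightarrow> 'k::comm_ring_1) \<Rightarrow> 'k" where
  "kGcounit G h = (\<Sum>i\<in>supp h. h i * (if i = \<one>\<^bsub>G\<^esub> then 1 else 0))"

definition kGantipode :: "'g monoid \<Rightarrow> ('g \<Rightarrow> 'k::comm_ring_1) \<Rightarrow> 'g \<Rightarrow> 'k" where
  "kGantipode G = lin_ext (\<lambda>g. bvec (inv\<^bsub>G\<^esub> g))"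

end

theory Submission
  imports Defs "HOL-Library.Function_Algebras"
begin



section \<open>Linear algebra on functions\<close>

definition sc :: "'k::field \<Rightarrow> ('i \<Rightarrow> 'k) \<Rightarrow> ('i \<Rightarrow> 'k)" where "sc c x = (\<lambda>j. c * x j)"

interpretation V: vector_space sc
  by unfold_locales (auto simp: sc_def fun_eq_iff algebra_simps)

lemma sc_apply [simp]: "sc c x j = c * x j" by (simp add: sc_def)

lemma sum_fun_apply: "(sum f A) x = (\<Sum>a\<in>A. f a x)"
  by (induct A rule: infinite_finite_induct) auto

lemma lspan_eq: "lspan X = V.span X"
proof -
  have "(\<lambda>j. \<Sum>a\<in>A. c a * a j) = (\<Sum>a\<in>A. sc (c a) a)" for A and c :: "('a \<Rightarrow> 'b) \<Rightarrow> 'b"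
    by (auto simp: fun_eq_iff sum_fun_apply)
  then show ?thesis unfolding lspan_def V.span_explicit by auto
qed

lemma lsubspace_eq: "lsubspace D = V.subspace D"
  unfolding lsubspace_def V.subspace_def
  by (auto simp: sc_def zero_fun_def plus_fun_def)

definition lin :: "(('i \<Rightarrow> 'k::field) \<Rightarrow> ('j \<Rightarrow> 'k)) \<Rightarrow> bool" where
  "lin X \<longleftrightarrow> (\<forall>x y. X (x + y) = X x + X y) \<and> (\<forall>c x. X (sc c x) = sc c (X x))"

lemma lin_add: "lin X \<Longrightarrow> X (x + y) = X x + X y" by (simp add: lin_def)
lemma lin_sc: "lin X \<Longrightarrow> X (sc c x) = sc c (X x)" by (simp add: lin_def)
lemma lin_zero: "lin X \<Longrightarrow> X 0 = 0"
  using lin_sc[of X 0 0] by (simp add: V.scale_zero_left)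
lemma lin_sum: "lin X \<Longrightarrow> X (sum f A) = (\<Sum>a\<in>A. X (f a))"
  by (induct A rule: infinite_finite_induct) (auto simp: lin_zero lin_add)
lemma lin_minus: "lin X \<Longrightarrow> X (- x) = - X x"
proof -
  assume l: "lin X"
  have "sc (-1) x = - x" "sc (-1) (X x) = - X x" by (auto simp: fun_eq_iff)
  then show ?thesis using lin_sc[OF l, of "-1" x] by simp
qed
lemma lin_diff: "lin X \<Longrightarrow> X (x - y) = X x - X y"
  using lin_add[of X x "-y"] lin_minus[of X y] by simp
lemma lin_comp: "lin X \<Longrightarrow> lin Y \<Longrightarrow> lin (\<lambda>x. X (Y x))"
  by (simp add: lin_def)
lemma lin_id: "lin (\<lambda>x. x)" by (simp add: lin_def)
lemma lin_sub: "lin X \<Longrightarrow> lin Y \<Longrightarrow> lin (\<lambda>x. X x - Y x)"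
  by (simp add: lin_def algebra_simps sc_def fun_eq_iff)
lemma lin_plus: "lin X \<Longrightarrow> lin Y \<Longrightarrow> lin (\<lambda>x. X x + Y x)"
  by (simp add: lin_def algebra_simps sc_def fun_eq_iff)
lemma lin_scale: "lin X \<Longrightarrow> lin (\<lambda>x. sc c (X x))"
  by (simp add: lin_def algebra_simps sc_def fun_eq_iff)
lemma lin_sumI: "(\<And>a. a \<in> A \<Longrightarrow> lin (X a)) \<Longrightarrow> lin (\<lambda>x. \<Sum>a\<in>A. X a x)"
  by (induct A rule: infinite_finite_induct)
     (auto simp: lin_def sum.distrib sc_def fun_eq_iff sum_fun_apply sum_distrib_left distrib_left)

lemma lin_span_image: assumes "lin X" "x \<in> V.span A" shows "X x \<in> V.span (X ` A)"
proof -
  from assms(2) obtain t r where t: "finite t" "t \<subseteq> A" "x = (\<Sum>a\<in>t. sc (r a) a)"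
    unfolding V.span_explicit by auto
  then have "X x = (\<Sum>a\<in>t. sc (r a) (X a))" using assms(1) by (simp add: lin_sum lin_sc del: sc_apply)
  also have "\<dots> \<in> V.span (X ` A)"
    using t by (intro V.span_sum V.span_scale V.span_base) auto
  finally show ?thesis .
qed

lemma dim_strict:
  assumes "V.subspace D" "V.subspace E" "D \<subseteq> E" "D \<noteq> E" "E \<subseteq> V.span W" "finite W"
  shows "V.dim D < V.dim E"
proof -
  obtain bD where bD: "bD \<subseteq> D" "V.independent bD" "D \<subseteq> V.span bD" "card bD = V.dim D"
    by (rule V.basis_exists)
  obtain bE where bE: "bD \<subseteq> bE" "bE \<subseteq> E" "V.independent bE" "E \<subseteq> V.span bE"
    using V.maximal_independent_subset_extend[of bD E] bD assms(3) by blast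
  have fin: "finite bE" using V.independent_span_bound[OF assms(6) bE(3)] bE(2) assms(5) by auto
  have cE: "card bE = V.dim E" using V.basis_card_eq_dim[OF bE(2) bE(4) bE(3)] .
  have "bD \<noteq> bE"
  proof
    assume "bD = bE"
    then have "E \<subseteq> D" using bE(4) V.span_minimal[OF bD(1) assms(1)] by auto
    then show False using assms(3,4) by auto
  qed
  then have "card bD < card bE" using bE(1) fin by (intro psubset_card_mono) auto
  then show ?thesis using bD(4) cE by simp
qed

lemma sum_delta_mult: "finite B \<Longrightarrow> (\<Sum>a\<in>B. f a * (if j = a then 1 else 0)) = (if j \<in> B then f j else (0::'k::comm_semiring_1))"
proof -
  assume "finite B"
  have "(\<Sum>a\<in>B. f a * (if j = a then 1 else 0)) = (\<Sum>a\<in>B. if a = j then f j else 0)"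
    by (rule sum.cong) auto
  then show ?thesis using \<open>finite B\<close> by (simp add: sum.delta')
qed

lemma supp_finite_span: assumes "finite B"
  shows "V.span (bvec ` B) = {h. supp h \<subseteq> B}" (is "V.span ?X = ?S")
proof
  have "V.subspace ?S"
    unfolding V.subspace_def supp_def by (auto simp: subset_iff; metis add.left_neutral)
  moreover have "?X \<subseteq> ?S"
    by (auto simp: bvec_def supp_def subset_iff split: if_split_asm)
  ultimately show "V.span ?X \<subseteq> ?S" by (metis V.span_minimal)
next
  show "?S \<subseteq> V.span ?X"
  proof
    fix h assume "h \<in> ?S"
    then have hs: "supp h \<subseteq> B" by simp
    have "h = (\<Sum>i\<in>B. sc (h i) (bvec i))"
    proof
      fix j
      show "h j = (\<Sum>i\<in>B. sc (h i) (bvec i)) j"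
        using hs assms by (auto simp: sum_fun_apply bvec_def supp_def sum_delta_mult)
    qed
    also have "\<dots> \<in> V.span ?X"
      by (intro V.span_sum V.span_scale V.span_base) auto
    finally show "h \<in> V.span ?X" .
  qed
qed

section \<open>Matched pair facts\<close>

context matched_pair
begin

lemma lact_oneF: assumes "g \<in> carrier G" shows "lact g \<one>\<^bsub>F\<^esub> = \<one>\<^bsub>F\<^esub>"
proof -
  have "lact g \<one>\<^bsub>F\<^esub> = lact g \<one>\<^bsub>F\<^esub> \<otimes>\<^bsub>F\<^esub> lact g \<one>\<^bsub>F\<^esub>"
    using mp_lact[OF assms F.one_closed F.one_closed] ract_one[OF assms] by simp
  then show ?thesis using lact_closed[OF assms F.one_closed]
    using F.l_cancel_one' by blast
qed

lemma lact_inv_cancel: "g \<in> carrier G \<Longrightarrow> h \<in> carrier F \<Longrightarrow> lact (inv\<^bsub>G\<^esub> g) (lact g h) = h"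
  by (metis G.inv_closed G.l_inv lact_mult lact_one)

lemma lact_inv_cancel2: "g \<in> carrier G \<Longrightarrow> h \<in> carrier F \<Longrightarrow> lact g (lact (inv\<^bsub>G\<^esub> g) h) = h"
  by (metis G.inv_closed G.r_inv lact_mult lact_one)

lemma ract_inv_cancel: "g \<in> carrier G \<Longrightarrow> h \<in> carrier F \<Longrightarrow> ract (ract g h) (inv\<^bsub>F\<^esub> h) = g"
  by (metis F.inv_closed F.r_inv ract_mult ract_one)

definition orb :: "'f \<Rightarrow> 'f set" where "orb f = (\<lambda>g. lact g f) ` carrier G"
definition Bf :: "'f \<Rightarrow> ('g \<times> 'f) set" where "Bf f = carrier G \<times> orb f"

lemma orb_sub: "f \<in> carrier F \<Longrightarrow> orb f \<subseteq> carrier F"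
  by (auto simp: orb_def lact_closed)

lemma orb_closed: "f \<in> carrier F \<Longrightarrow> h \<in> orb f \<Longrightarrow> x \<in> carrier G \<Longrightarrow> lact x h \<in> orb f"
  by (auto simp: orb_def lact_mult[symmetric] intro!: imageI)

lemma orb_self: "f \<in> carrier F \<Longrightarrow> f \<in> orb f"
  by (auto simp: orb_def lact_one intro!: image_eqI[where x="\<one>\<^bsub>G\<^esub>"])

lemma finite_orb: "finite (orb f)" by (simp add: orb_def G_finite)
lemma finite_Bf: "finite (Bf f)" by (simp add: Bf_def G_finite finite_orb)

lemma Csub_eq: assumes "f \<in> carrier F" shows "(Csub F G lact f :: ('g \<times> 'f \<Rightarrow> 'k) set) = {h. supp h \<subseteq> Bf f}"
proof -
  have "{bvec (g, lact g' f) | g g'. g \<in> carrier G \<and> g' \<in> carrier G} = (bvec ` Bf f :: ('g \<times> 'f \<Rightarrow> 'k) set)"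
    by (auto simp: Bf_def orb_def)
  then show ?thesis unfolding Csub_def using supp_finite_span[OF finite_Bf] 
    by (simp add: lspan_eq)
qed

end




context matched_pair
begin

definition Lop :: "'g \<times> 'f \<Rightarrow> ('g \<times> 'f \<Rightarrow> 'k) \<Rightarrow> ('g \<times> 'f \<Rightarrow> 'k)" where
  "Lop j c = (\<lambda>i. if fst i \<in> carrier G \<and> fst j \<in> carrier G \<and> snd i = lact (fst j) (snd j)
      then \<tau> (fst i) (fst j) (snd j) * c (fst i \<otimes>\<^bsub>G\<^esub> fst j, snd j) else 0)"

definition Rop :: "'g \<times> 'f \<Rightarrow> ('g \<times> 'f \<Rightarrow> 'k) \<Rightarrow> ('g \<times> 'f \<Rightarrow> 'k)" where
  "Rop i c = (\<lambda>j. Lop j c i)"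

lemma G_div_iff: "g \<in> carrier G \<Longrightarrow> y \<in> carrier G \<Longrightarrow>
    (g \<otimes>\<^bsub>G\<^esub> inv\<^bsub>G\<^esub> y = a) \<longleftrightarrow> (a \<in> carrier G \<and> g = a \<otimes>\<^bsub>G\<^esub> y)"
  by (metis G.inv_closed G.inv_solve_right G.m_closed)

lemma Hcomul_coord:
  assumes fin: "finite (supp c)" and sub: "supp c \<subseteq> carrier G \<times> UNIV"
  shows "Hcomul F G lact \<tau> c (i, j) = Lop j c i"
proof -
  obtain a k y m where ij: "i = (a, k)" "j = (y, m)" by (cases i, cases j)
  have inner: "(\<Sum>x\<in>carrier G. \<tau> (fst q \<otimes>\<^bsub>G\<^esub> inv\<^bsub>G\<^esub> x) x (snd q) *
        tensor (bvec (fst q \<otimes>\<^bsub>G\<^esub> inv\<^bsub>G\<^esub> x, lact x (snd q))) (bvec (x, snd q)) (i, j))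
      = (if q = (a \<otimes>\<^bsub>G\<^esub> y, m) \<and> a \<in> carrier G \<and> y \<in> carrier G \<and> k = lact y m
         then \<tau> a y m else 0)" if q: "q \<in> supp c" for q
  proof -
    have gq: "fst q \<in> carrier G" using q sub by auto
    have "(\<Sum>x\<in>carrier G. \<tau> (fst q \<otimes>\<^bsub>G\<^esub> inv\<^bsub>G\<^esub> x) x (snd q) *
        tensor (bvec (fst q \<otimes>\<^bsub>G\<^esub> inv\<^bsub>G\<^esub> x, lact x (snd q))) (bvec (x, snd q)) (i, j))
      = (\<Sum>x\<in>carrier G. if x = y then (if snd q = m \<and> fst q \<otimes>\<^bsub>G\<^esub> inv\<^bsub>G\<^esub> y = a \<and> lact y m = k
           then \<tau> (fst q \<otimes>\<^bsub>G\<^esub> inv\<^bsub>G\<^esub> y) y m else 0) else 0)"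
      by (rule sum.cong) (auto simp: tensor_def bvec_def ij)
    also have "\<dots> = (if y \<in> carrier G \<and> snd q = m \<and> fst q \<otimes>\<^bsub>G\<^esub> inv\<^bsub>G\<^esub> y = a \<and> lact y m = k
           then \<tau> (fst q \<otimes>\<^bsub>G\<^esub> inv\<^bsub>G\<^esub> y) y m else 0)"
      by (simp add: sum.delta' G_finite)
    also have "\<dots> = (if q = (a \<otimes>\<^bsub>G\<^esub> y, m) \<and> a \<in> carrier G \<and> y \<in> carrier G \<and> k = lact y m
         then \<tau> a y m else 0)"
      using G_div_iff[OF gq] by (cases q) auto
    finally show ?thesis .
  qed
  have "Hcomul F G lact \<tau> c (i, j) = (\<Sum>q\<in>supp c. c q * (\<Sum>x\<in>carrier G. \<tau> (fst q \<otimes>\<^bsub>G\<^esub> inv\<^bsub>G\<^esub> x) x (snd q) *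
        tensor (bvec (fst q \<otimes>\<^bsub>G\<^esub> inv\<^bsub>G\<^esub> x, lact x (snd q))) (bvec (x, snd q)) (i, j)))"
    unfolding Hcomul_def lin_ext_def by (simp add: case_prod_beta)
  also have "\<dots> = (\<Sum>q\<in>supp c. if q = (a \<otimes>\<^bsub>G\<^esub> y, m) then
      (if a \<in> carrier G \<and> y \<in> carrier G \<and> k = lact y m then c q * \<tau> a y m else 0) else 0)"
    by (rule sum.cong) (auto simp: inner)
  also have "\<dots> = Lop j c i"
    using fin by (auto simp: sum.delta' Lop_def ij supp_def)
  finally show ?thesis .
qed

end



lemma mult_rearr1: "(p1::'k::comm_semiring_1) * p2 = q1 * q2 \<Longrightarrow> p1 * (p2 * z) = q2 * (q1 * z)"
  by (metis mult.assoc mult.commute)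

lemma slice_span:
  assumes D: "V.subspace D" and T: "T \<in> V.span {tensor x y | x y. x \<in> D \<and> y \<in> D}"
  shows "(\<lambda>i. T (i, j)) \<in> D" "(\<lambda>j. T (i, j)) \<in> D"
proof -
  from T obtain t r where t: "finite t" "t \<subseteq> {tensor x y | x y. x \<in> D \<and> y \<in> D}"
    "T = (\<Sum>a\<in>t. sc (r a) a)"
    unfolding V.span_explicit by auto
  have "(\<lambda>i. T (i, j)) = (\<Sum>a\<in>t. sc (r a) (\<lambda>i. a (i, j)))"
    using t(3) by (auto simp: fun_eq_iff sum_fun_apply)
  also have "\<dots> \<in> D"
  proof (rule V.subspace_sum[OF D], rule V.subspace_scale[OF D])
    fix a assume "a \<in> t"
    then obtain x y where a: "a = tensor x y" "x \<in> D" "y \<in> D" using t(2) by auto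
    have "(\<lambda>i. a (i, j)) = sc (y j) x" by (auto simp: a tensor_def fun_eq_iff)
    then show "(\<lambda>i. a (i, j)) \<in> D" using V.subspace_scale[OF D a(2)] by simp
  qed
  finally show "(\<lambda>i. T (i, j)) \<in> D" .
  have "(\<lambda>j. T (i, j)) = (\<Sum>a\<in>t. sc (r a) (\<lambda>j. a (i, j)))"
    using t(3) by (auto simp: fun_eq_iff sum_fun_apply)
  also have "\<dots> \<in> D"
  proof (rule V.subspace_sum[OF D], rule V.subspace_scale[OF D])
    fix a assume "a \<in> t"
    then obtain x y where a: "a = tensor x y" "x \<in> D" "y \<in> D" using t(2) by auto
    have "(\<lambda>j. a (i, j)) = sc (x i) y" by (auto simp: a tensor_def fun_eq_iff)
    then show "(\<lambda>j. a (i, j)) \<in> D" using V.subspace_scale[OF D a(3)] by simp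
  qed
  finally show "(\<lambda>j. T (i, j)) \<in> D" .
qed

context matched_pair
begin

lemma subcoalg_Lop:
  assumes "subcoalgebra (Hspace F G) (Hcomul F G lact \<tau>) D" "d \<in> D"
  shows "Lop j d \<in> D" "Rop i d \<in> D"
proof -
  have D: "V.subspace D" "d \<in> Hspace F G"
    and T: "Hcomul F G lact \<tau> d \<in> V.span {tensor x y | x y. x \<in> D \<and> y \<in> D}"
    using assms unfolding subcoalgebra_def lsubspace_eq lspan_eq by auto
  have fs: "finite (supp d)" "supp d \<subseteq> carrier G \<times> UNIV"
    using D(2) by (auto simp: Hspace_def fin_fun_def)
  have "(\<lambda>i. Hcomul F G lact \<tau> d (i, j)) = Lop j d"
    using Hcomul_coord[OF fs] by auto
  then show "Lop j d \<in> D" using slice_span(1)[OF D(1) T] by metis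
  have "(\<lambda>j. Hcomul F G lact \<tau> d (i, j)) = Rop i d"
    using Hcomul_coord[OF fs] by (auto simp: Rop_def)
  then show "Rop i d \<in> D" using slice_span(2)[OF D(1) T] by metis
qed

lemma lin_Lop: "lin (Lop j)"
  by (auto simp: lin_def Lop_def fun_eq_iff algebra_simps)

lemma lin_Rop: "lin (Rop i)"
  by (auto simp: lin_def Rop_def Lop_def fun_eq_iff algebra_simps)

lemma Lop_comp:
  assumes x: "x \<in> carrier G" and y: "y \<in> carrier G" and m': "m' \<in> carrier F"
  shows "Lop (x, m) (Lop (y, m') c) =
    sc (if m = lact y m' then \<tau> x y m' else 0) (Lop (x \<otimes>\<^bsub>G\<^esub> y, m') c)"
proof (rule ext)
  fix i :: "'g \<times> 'f" obtain b n where i: "i = (b, n)" by (cases i)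
  show "Lop (x, m) (Lop (y, m') c) i = sc (if m = lact y m' then \<tau> x y m' else 0) (Lop (x \<otimes>\<^bsub>G\<^esub> y, m') c) i"
  proof (cases "b \<in> carrier G \<and> m = lact y m' \<and> n = lact x m")
    case True
    have co: "\<tau> b x (lact y m') * \<tau> (b \<otimes>\<^bsub>G\<^esub> x) y m' = \<tau> x y m' * \<tau> b (x \<otimes>\<^bsub>G\<^esub> y) m'"
      using tau_cocycle[of b x y m'] True assms by (simp add: mult.commute)
    show ?thesis using True assms
      by (simp add: Lop_def i G.m_assoc lact_mult mult_rearr1[OF co])
  next
    case False
    then show ?thesis using assms by (auto simp: Lop_def i lact_mult)
  qed
qed

lemma tau_1l [simp]: "g \<in> carrier G \<Longrightarrow> h \<in> carrier F \<Longrightarrow> \<tau> \<one>\<^bsub>G\<^esub> g h = 1"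
  using tau_norm[of g g h] by simp
lemma tau_1r [simp]: "g \<in> carrier G \<Longrightarrow> h \<in> carrier F \<Longrightarrow> \<tau> g \<one>\<^bsub>G\<^esub> h = 1"
  using tau_norm[of g g h] by simp

context fixes f assumes f: "f \<in> carrier F"
begin

abbreviation CC where "CC \<equiv> {h. supp h \<subseteq> Bf f}"

lemma CC_subspace: "V.subspace CC"
  unfolding V.subspace_def supp_def by (auto simp: subset_iff; metis add.left_neutral)

lemma CC_out: "c \<in> CC \<Longrightarrow> q \<notin> Bf f \<Longrightarrow> c q = 0"
  by (auto simp: supp_def)

lemma CC_outm: "c \<in> CC \<Longrightarrow> m \<notin> carrier F \<Longrightarrow> c (g, m) = 0"
  using orb_sub[OF f] by (auto simp: supp_def Bf_def)

lemma CC_in: "c \<in> CC \<Longrightarrow> c q \<noteq> 0 \<Longrightarrow> q \<in> Bf f"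
  by (auto simp: supp_def)

lemma Rop_comp:
  assumes a: "a \<in> carrier G" and a': "a' \<in> carrier G" and k: "k \<in> carrier F" and c: "c \<in> CC"
  shows "Rop (a, k) (Rop (a', k') c) =
    sc (if k' = lact a k then \<tau> a' a k else 0) (Rop (a' \<otimes>\<^bsub>G\<^esub> a, k) c)"
proof (rule ext)
  fix j :: "'g \<times> 'f" obtain x m where j: "j = (x, m)" by (cases j)
  show "Rop (a, k) (Rop (a', k') c) j = sc (if k' = lact a k then \<tau> a' a k else 0) (Rop (a' \<otimes>\<^bsub>G\<^esub> a, k) c) j"
  proof (cases "m \<in> carrier F \<and> x \<in> carrier G \<and> k = lact x m \<and> k' = lact a k")
    case True
    have co: "\<tau> a x m * \<tau> a' (a \<otimes>\<^bsub>G\<^esub> x) m = \<tau> (a' \<otimes>\<^bsub>G\<^esub> a) x m * \<tau> a' a (lact x m)"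
      using tau_cocycle[of a' a x m] True assms by (simp add: mult.commute)
    show ?thesis using True assms
      by (simp add: Rop_def Lop_def j G.m_assoc lact_mult mult_rearr1[OF co])
  next
    case False
    show ?thesis
    proof (cases "m \<in> carrier F")
      case True
      then show ?thesis using False assms by (auto simp: Rop_def Lop_def j lact_mult)
    qed (use CC_outm[OF c] in \<open>auto simp: Rop_def Lop_def j\<close>)
  qed
qed

lemma LR_comm:
  assumes c: "c \<in> CC"
  shows "Lop j (Rop i c) = Rop i (Lop j c)"
proof (rule ext)
  fix q :: "'g \<times> 'f" obtain b n where q: "q = (b, n)" by (cases q)
  obtain x m where j: "j = (x, m)" by (cases j)
  obtain a k where i: "i = (a, k)" by (cases i)
  show "Lop j (Rop i c) q = Rop i (Lop j c) q"
  proof (cases "m \<in> carrier F \<and> x \<in> carrier G \<and> a \<in> carrier G \<and> b \<in> carrier G \<and> n = lact x m \<and> k = lact b n")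
    case True
    have co: "\<tau> b x m * \<tau> a (b \<otimes>\<^bsub>G\<^esub> x) m = \<tau> (a \<otimes>\<^bsub>G\<^esub> b) x m * \<tau> a b (lact x m)"
      using tau_cocycle[of a b x m] True by (simp add: mult.commute)
    show ?thesis using True
      by (simp add: Rop_def Lop_def j i q G.m_assoc lact_mult mult_rearr1[OF co])
  next
    case False
    show ?thesis
    proof (cases "m \<in> carrier F")
      case True
      then show ?thesis using False by (auto simp: Rop_def Lop_def j i q lact_mult)
    qed (use CC_outm[OF c] in \<open>auto simp: Rop_def Lop_def j i q\<close>)
  qed
qed

lemma Lop_unit:
  assumes c: "c \<in> CC"
  shows "(\<Sum>h\<in>orb f. Lop (\<one>\<^bsub>G\<^esub>, h) c) = c"
proof (rule ext)
  fix q :: "'g \<times> 'f" obtain b n where q: "q = (b, n)" by (cases q)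
  have "(\<Sum>h\<in>orb f. Lop (\<one>\<^bsub>G\<^esub>, h) c) q = (\<Sum>h\<in>orb f. if h = n then (if b \<in> carrier G then c (b, n) else 0) else 0)"
    unfolding sum_fun_apply
    by (rule sum.cong) (use orb_sub[OF f] in \<open>auto simp: Lop_def q lact_one\<close>)
  also have "\<dots> = c q"
    using CC_out[OF c, of q] by (auto simp: sum.delta' finite_orb q Bf_def)
  finally show "(\<Sum>h\<in>orb f. Lop (\<one>\<^bsub>G\<^esub>, h) c) q = c q" .
qed

lemma Rop_unit:
  assumes c: "c \<in> CC"
  shows "(\<Sum>k\<in>orb f. Rop (\<one>\<^bsub>G\<^esub>, k) c) = c"
proof (rule ext)
  fix q :: "'g \<times> 'f" obtain x m where q: "q = (x, m)" by (cases q)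
  have "(\<Sum>k\<in>orb f. Rop (\<one>\<^bsub>G\<^esub>, k) c) q = (\<Sum>k\<in>orb f. if k = lact x m then (if x \<in> carrier G then c (x, m) else 0) else 0)"
    unfolding sum_fun_apply
  proof (rule sum.cong)
    fix k
    show "Rop (\<one>\<^bsub>G\<^esub>, k) c q = (if k = lact x m then (if x \<in> carrier G then c (x, m) else 0) else 0)"
      by (cases "m \<in> carrier F") (auto simp: Rop_def Lop_def q CC_outm[OF c])
  qed simp
  also have "\<dots> = c q"
    using CC_out[OF c, of q] orb_closed[OF f] by (auto simp: sum.delta' finite_orb q Bf_def)
  finally show "(\<Sum>k\<in>orb f. Rop (\<one>\<^bsub>G\<^esub>, k) c) q = c q" .
qed

lemma Lop_CC: "c \<in> CC \<Longrightarrow> Lop j c \<in> CC"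
  using orb_closed[OF f] by (auto simp: supp_def Lop_def Bf_def split: if_splits)

lemma Rop_CC: "c \<in> CC \<Longrightarrow> Rop i c \<in> CC"
  by (auto simp: supp_def Rop_def Lop_def Bf_def split: if_splits)

lemma Lop_CC2: "x \<in> carrier G \<Longrightarrow> lact x m \<in> orb f \<Longrightarrow> Lop (x, m) w \<in> CC"
  by (auto simp: supp_def Lop_def Bf_def split: if_splits)

lemma Lop_out: assumes c: "c \<in> CC" and j: "j \<notin> Bf f" shows "Lop j c = 0"
proof (rule ext)
  fix q
  show "Lop j c q = 0 q"
    using CC_in[OF c, of "(fst q \<otimes>\<^bsub>G\<^esub> fst j, snd j)"] j by (auto simp: Lop_def Bf_def mem_Times_iff)
qed

lemma Rop_out: assumes c: "c \<in> CC" and i: "i \<notin> Bf f" shows "Rop i c = 0"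
proof (rule ext)
  fix q
  show "Rop i c q = 0 q"
    using CC_in[OF c, of "(fst i \<otimes>\<^bsub>G\<^esub> fst q, snd q)"] i orb_closed[OF f]
    by (auto simp: Rop_def Lop_def Bf_def mem_Times_iff)
qed

end

end



interpretation VP: vector_space_pair sc sc ..

lemma lin_iff_linear: "lin X \<longleftrightarrow> Vector_Spaces.linear sc sc X"
  unfolding lin_def Vector_Spaces.linear_iff by (simp add: V.vector_space_axioms)

lemma proj_exists:
  assumes S: "V.subspace S"
  shows "\<exists>p. lin p \<and> (\<forall>w. p w \<in> S) \<and> (\<forall>s\<in>S. p s = s)"
proof -
  obtain bS where bS: "bS \<subseteq> S" "V.independent bS" "S \<subseteq> V.span bS" "card bS = V.dim S"
    by (rule V.basis_exists)
  define p where "p = VP.construct bS (\<lambda>x. x)"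
  have lp: "Vector_Spaces.linear sc sc p" unfolding p_def by (rule VP.linear_construct[OF bS(2)])
  have "p w \<in> S" for w
    using VP.construct_in_span[OF bS(2), of "\<lambda>x. x" w] V.span_minimal[OF bS(1) S]
    unfolding p_def by auto
  moreover have "p s = s" if "s \<in> S" for s
  proof -
    have lid: "Vector_Spaces.linear sc sc (\<lambda>x. x)" using lin_iff_linear lin_id by blast
    show ?thesis
      using VP.linear_eq_on[OF lp lid, of s bS] bS(3) that VP.construct_basis[OF bS(2)]
      unfolding p_def by auto
  qed
  ultimately show ?thesis using lp lin_iff_linear by blast
qed

context matched_pair
begin

lemma tau_inv_swap:
  assumes g: "g \<in> carrier G" and x: "x \<in> carrier F"
  shows "\<tau> g (inv\<^bsub>G\<^esub> g) (lact g x) = \<tau> (inv\<^bsub>G\<^esub> g) g x"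
  using tau_cocycle[of g "inv\<^bsub>G\<^esub> g" g x] assms by simp

lemma tauL:
  assumes c: "c \<in> carrier G" and a: "a \<in> carrier G" and h: "h \<in> carrier F"
  shows "\<tau> c a h * \<tau> (inv\<^bsub>G\<^esub> (c \<otimes>\<^bsub>G\<^esub> a)) (c \<otimes>\<^bsub>G\<^esub> a) h
       = \<tau> (inv\<^bsub>G\<^esub> (c \<otimes>\<^bsub>G\<^esub> a)) c (lact a h) * \<tau> (inv\<^bsub>G\<^esub> a) a h"
proof -
  have e: "inv\<^bsub>G\<^esub> (c \<otimes>\<^bsub>G\<^esub> a) \<otimes>\<^bsub>G\<^esub> c = inv\<^bsub>G\<^esub> a"
    using c a by (simp add: G.inv_mult_group G.m_assoc)
  show ?thesis
    using tau_cocycle[of "inv\<^bsub>G\<^esub> (c \<otimes>\<^bsub>G\<^esub> a)" c a h] assms e by (simp add: mult.commute)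
qed

lemma tauR:
  assumes a: "a \<in> carrier G" and c: "c \<in> carrier G" and k: "k \<in> carrier F"
  shows "\<tau> a c k * \<tau> (inv\<^bsub>G\<^esub> (a \<otimes>\<^bsub>G\<^esub> c)) (a \<otimes>\<^bsub>G\<^esub> c) k
       = \<tau> c (inv\<^bsub>G\<^esub> (a \<otimes>\<^bsub>G\<^esub> c)) (lact (a \<otimes>\<^bsub>G\<^esub> c) k) * \<tau> (inv\<^bsub>G\<^esub> a) a (lact c k)"
proof -
  have e1: "c \<otimes>\<^bsub>G\<^esub> inv\<^bsub>G\<^esub> (a \<otimes>\<^bsub>G\<^esub> c) = inv\<^bsub>G\<^esub> a"
    using c a by (simp add: G.inv_mult_group G.m_assoc[symmetric])
  have e2: "inv\<^bsub>G\<^esub> (a \<otimes>\<^bsub>G\<^esub> c) \<otimes>\<^bsub>G\<^esub> (a \<otimes>\<^bsub>G\<^esub> c) = \<one>\<^bsub>G\<^esub>"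
    using c a by simp
  have i1: "\<tau> (inv\<^bsub>G\<^esub> a) a (lact c k) = \<tau> (inv\<^bsub>G\<^esub> a) (a \<otimes>\<^bsub>G\<^esub> c) k * \<tau> a c k"
    using tau_cocycle[of "inv\<^bsub>G\<^esub> a" a c k] assms by simp
  have i2: "\<tau> c (inv\<^bsub>G\<^esub> (a \<otimes>\<^bsub>G\<^esub> c)) (lact (a \<otimes>\<^bsub>G\<^esub> c) k) * \<tau> (inv\<^bsub>G\<^esub> a) (a \<otimes>\<^bsub>G\<^esub> c) k
      = \<tau> (inv\<^bsub>G\<^esub> (a \<otimes>\<^bsub>G\<^esub> c)) (a \<otimes>\<^bsub>G\<^esub> c) k"
    using tau_cocycle[of c "inv\<^bsub>G\<^esub> (a \<otimes>\<^bsub>G\<^esub> c)" "a \<otimes>\<^bsub>G\<^esub> c" k] assms e1 e2 by simp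
  show ?thesis unfolding i1 i2[symmetric] by (simp add: ac_simps)
qed

lemma coefL:
  assumes c: "c \<in> carrier G" and a: "a \<in> carrier G" and k: "k \<in> carrier F"
  shows "inverse (\<tau> a (inv\<^bsub>G\<^esub> a) k) * \<tau> c a (lact (inv\<^bsub>G\<^esub> a) k)
    = inverse (\<tau> (c \<otimes>\<^bsub>G\<^esub> a) (inv\<^bsub>G\<^esub> (c \<otimes>\<^bsub>G\<^esub> a)) (lact c k)) * \<tau> (inv\<^bsub>G\<^esub> (c \<otimes>\<^bsub>G\<^esub> a)) c k"
proof -
  define h where "h = lact (inv\<^bsub>G\<^esub> a) k"
  have h: "h \<in> carrier F" "k = lact a h" using assms lact_closed lact_inv_cancel2 by (auto simp: h_def)
  have ca: "c \<otimes>\<^bsub>G\<^esub> a \<in> carrier G" using assms by simp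
  have e1: "\<tau> a (inv\<^bsub>G\<^esub> a) k = \<tau> (inv\<^bsub>G\<^esub> a) a h"
    using tau_inv_swap[OF a h(1)] h(2) by simp
  have e2: "\<tau> (c \<otimes>\<^bsub>G\<^esub> a) (inv\<^bsub>G\<^esub> (c \<otimes>\<^bsub>G\<^esub> a)) (lact c k) = \<tau> (inv\<^bsub>G\<^esub> (c \<otimes>\<^bsub>G\<^esub> a)) (c \<otimes>\<^bsub>G\<^esub> a) h"
    using tau_inv_swap[OF ca h(1)] h assms by (simp add: lact_mult)
  have nz: "\<tau> (inv\<^bsub>G\<^esub> a) a h \<noteq> 0" "\<tau> (inv\<^bsub>G\<^esub> (c \<otimes>\<^bsub>G\<^esub> a)) (c \<otimes>\<^bsub>G\<^esub> a) h \<noteq> 0"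
    using tau_nonzero assms h ca by auto
  show ?thesis unfolding e1 e2 h_def[symmetric] using tauL[OF c a h(1)] nz h(2)
    by (simp add: field_simps)
qed

lemma coefR:
  assumes a: "a \<in> carrier G" and c: "c \<in> carrier G" and k: "k \<in> carrier F"
  shows "inverse (\<tau> (inv\<^bsub>G\<^esub> a) a (lact c k)) * \<tau> a c k
    = inverse (\<tau> (inv\<^bsub>G\<^esub> (a \<otimes>\<^bsub>G\<^esub> c)) (a \<otimes>\<^bsub>G\<^esub> c) k) * \<tau> c (inv\<^bsub>G\<^esub> (a \<otimes>\<^bsub>G\<^esub> c)) (lact (a \<otimes>\<^bsub>G\<^esub> c) k)"
proof -
  have nz: "\<tau> (inv\<^bsub>G\<^esub> a) a (lact c k) \<noteq> 0" "\<tau> (inv\<^bsub>G\<^esub> (a \<otimes>\<^bsub>G\<^esub> c)) (a \<otimes>\<^bsub>G\<^esub> c) k \<noteq> 0"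
    using tau_nonzero assms lact_closed by auto
  show ?thesis using tauR[OF a c k] nz by (simp add: field_simps)
qed

end



context matched_pair
begin

lemma sum_G_lmult: "c \<in> carrier G \<Longrightarrow> (\<Sum>b\<in>carrier G. P b) = (\<Sum>a\<in>carrier G. P (c \<otimes>\<^bsub>G\<^esub> a))"
  by (rule sum.reindex_bij_witness[of _ "\<lambda>a. c \<otimes>\<^bsub>G\<^esub> a" "\<lambda>b. inv\<^bsub>G\<^esub> c \<otimes>\<^bsub>G\<^esub> b"])
     (auto simp: G.m_assoc[symmetric])

lemma sum_G_rmult: "c \<in> carrier G \<Longrightarrow> (\<Sum>b\<in>carrier G. P b) = (\<Sum>a\<in>carrier G. P (a \<otimes>\<^bsub>G\<^esub> c))"
  by (rule sum.reindex_bij_witness[of _ "\<lambda>a. a \<otimes>\<^bsub>G\<^esub> c" "\<lambda>b. b \<otimes>\<^bsub>G\<^esub> inv\<^bsub>G\<^esub> c"])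
     (auto simp: G.m_assoc)

definition nGinv :: 'k where "nGinv = inverse (of_nat (card (carrier G)))"

definition AvL :: "'f \<Rightarrow> (('g \<times> 'f \<Rightarrow> 'k) \<Rightarrow> ('g \<times> 'f \<Rightarrow> 'k)) \<Rightarrow> ('g \<times> 'f \<Rightarrow> 'k) \<Rightarrow> ('g \<times> 'f \<Rightarrow> 'k)" where
  "AvL f X c = (\<Sum>a\<in>carrier G. \<Sum>h\<in>orb f. sc (nGinv * inverse (\<tau> a (inv\<^bsub>G\<^esub> a) h))
      (Lop (a, lact (inv\<^bsub>G\<^esub> a) h) (X (Lop (inv\<^bsub>G\<^esub> a, h) c))))"

definition AvR :: "'f \<Rightarrow> (('g \<times> 'f \<Rightarrow> 'k) \<Rightarrow> ('g \<times> 'f \<Rightarrow> 'k)) \<Rightarrow> ('g \<times> 'f \<Rightarrow> 'k) \<Rightarrow> ('g \<times> 'f \<Rightarrow> 'k)" where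
  "AvR f X c = (\<Sum>a\<in>carrier G. \<Sum>k\<in>orb f. sc (nGinv * inverse (\<tau> (inv\<^bsub>G\<^esub> a) a k))
      (Rop (a, k) (X (Rop (inv\<^bsub>G\<^esub> a, lact a k) c))))"

lemma AvL_lin: assumes X: "lin X" shows "lin (AvL f X)"
proof -
  have "lin (\<lambda>c. Lop j (X (Lop j' c)))" for j j'
    by (rule lin_comp[OF lin_Lop lin_comp[OF X lin_Lop]])
  then show ?thesis unfolding AvL_def
    by (intro lin_sumI lin_scale) 
qed

lemma AvR_lin: assumes X: "lin X" shows "lin (AvR f X)"
proof -
  have "lin (\<lambda>c. Rop j (X (Rop j' c)))" for j j'
    by (rule lin_comp[OF lin_Rop lin_comp[OF X lin_Rop]])
  then show ?thesis unfolding AvR_def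
    by (intro lin_sumI lin_scale) 
qed

context fixes f assumes f: "f \<in> carrier F"
begin

lemma AvL_CC: "AvL f X c \<in> CC f"
  unfolding AvL_def
proof (intro V.subspace_sum[OF CC_subspace[OF f]] V.subspace_scale[OF CC_subspace[OF f]])
  fix a h assume a: "a \<in> carrier G" and h: "h \<in> orb f"
  have "lact a (lact (inv\<^bsub>G\<^esub> a) h) = h" using a h orb_sub[OF f] lact_inv_cancel2 by auto
  then show "Lop (a, lact (inv\<^bsub>G\<^esub> a) h) (X (Lop (inv\<^bsub>G\<^esub> a, h) c)) \<in> CC f"
    using Lop_CC2[OF f a] h by simp
qed

lemma AvR_CC: assumes X: "\<And>w. w \<in> CC f \<Longrightarrow> X w \<in> CC f" and c: "c \<in> CC f"
  shows "AvR f X c \<in> CC f"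
  unfolding AvR_def
  by (intro V.subspace_sum[OF CC_subspace[OF f]] V.subspace_scale[OF CC_subspace[OF f]] Rop_CC[OF f]
      X Rop_CC[OF f] c)

lemma AvL_S:
  assumes S: "V.subspace S" and X: "\<And>w. X w \<in> S" and SL: "\<And>j s. s \<in> S \<Longrightarrow> Lop j s \<in> S"
  shows "AvL f X c \<in> S"
  unfolding AvL_def by (intro V.subspace_sum[OF S] V.subspace_scale[OF S] SL X)

lemma AvR_S:
  assumes S: "V.subspace S" and X: "\<And>w. X w \<in> S" and SR: "\<And>i s. s \<in> S \<Longrightarrow> Rop i s \<in> S"
  shows "AvR f X c \<in> S"
  unfolding AvR_def by (intro V.subspace_sum[OF S] V.subspace_scale[OF S] SR X)

lemma sum_card_scale: assumes nG: "(of_nat (card (carrier G)) :: 'k) \<noteq> 0"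
  shows "(\<Sum>a\<in>carrier G. sc nGinv s) = s"
  using nG by (subst V.sum_constant_scale) (simp add: V.scale_scale nGinv_def)

lemma AvL_id:
  assumes S: "V.subspace S" "S \<subseteq> CC f" and X: "\<And>s. s \<in> S \<Longrightarrow> X s = s"
    and SL: "\<And>j s. s \<in> S \<Longrightarrow> Lop j s \<in> S"
    and nG: "(of_nat (card (carrier G)) :: 'k) \<noteq> 0" and s: "s \<in> S"
  shows "AvL f X s = s"
proof -
  have sC: "s \<in> CC f" using S s by auto
  have "AvL f X s = (\<Sum>a\<in>carrier G. \<Sum>h\<in>orb f. sc nGinv (Lop (\<one>\<^bsub>G\<^esub>, h) s))"
    unfolding AvL_def
  proof (intro sum.cong refl)
    fix a h assume a: "a \<in> carrier G" and h: "h \<in> orb f"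
    have hF: "h \<in> carrier F" using h orb_sub[OF f] by auto
    have nz: "\<tau> a (inv\<^bsub>G\<^esub> a) h \<noteq> 0" using tau_nonzero a hF by auto
    show "sc (nGinv * inverse (\<tau> a (inv\<^bsub>G\<^esub> a) h)) (Lop (a, lact (inv\<^bsub>G\<^esub> a) h) (X (Lop (inv\<^bsub>G\<^esub> a, h) s)))
        = sc nGinv (Lop (\<one>\<^bsub>G\<^esub>, h) s)"
      using X[OF SL[OF s]] Lop_comp[of a "inv\<^bsub>G\<^esub> a" h "lact (inv\<^bsub>G\<^esub> a) h" s] a hF nz
      by (simp add: V.scale_scale)
  qed
  also have "\<dots> = (\<Sum>a\<in>carrier G. sc nGinv s)"
    by (simp add: V.scale_sum_right[symmetric] Lop_unit[OF f sC])
  also have "\<dots> = s" by (rule sum_card_scale[OF nG])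
  finally show ?thesis .
qed

lemma AvR_id:
  assumes S: "V.subspace S" "S \<subseteq> CC f" and X: "\<And>s. s \<in> S \<Longrightarrow> X s = s"
    and SR: "\<And>i s. s \<in> S \<Longrightarrow> Rop i s \<in> S"
    and nG: "(of_nat (card (carrier G)) :: 'k) \<noteq> 0" and s: "s \<in> S"
  shows "AvR f X s = s"
proof -
  have sC: "s \<in> CC f" using S s by auto
  have "AvR f X s = (\<Sum>a\<in>carrier G. \<Sum>k\<in>orb f. sc nGinv (Rop (\<one>\<^bsub>G\<^esub>, k) s))"
    unfolding AvR_def
  proof (intro sum.cong refl)
    fix a k assume a: "a \<in> carrier G" and k: "k \<in> orb f"
    have kF: "k \<in> carrier F" using k orb_sub[OF f] by auto
    have nz: "\<tau> (inv\<^bsub>G\<^esub> a) a k \<noteq> 0" using tau_nonzero a kF by auto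
    show "sc (nGinv * inverse (\<tau> (inv\<^bsub>G\<^esub> a) a k)) (Rop (a, k) (X (Rop (inv\<^bsub>G\<^esub> a, lact a k) s)))
        = sc nGinv (Rop (\<one>\<^bsub>G\<^esub>, k) s)"
      using X[OF SR[OF s]] Rop_comp[OF f a _ kF sC, where a'="inv\<^bsub>G\<^esub> a" and k'="lact a k"] a kF nz
      by (simp add: V.scale_scale)
  qed
  also have "\<dots> = (\<Sum>a\<in>carrier G. sc nGinv s)"
    by (simp add: V.scale_sum_right[symmetric] Rop_unit[OF f sC])
  also have "\<dots> = s" by (rule sum_card_scale[OF nG])
  finally show ?thesis .
qed

lemma AvL_commL:
  assumes X: "lin X" and v: "v \<in> CC f"
  shows "Lop j (AvL f X v) = AvL f X (Lop j v)"
proof (cases "j \<in> Bf f")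
  case False
  then show ?thesis using Lop_out[OF f AvL_CC False] Lop_out[OF f v False] lin_zero[OF AvL_lin[OF X]] by simp
next
  case True
  then obtain c0 k where j: "j = (c0, k)" and c0: "c0 \<in> carrier G" and k: "k \<in> orb f"
    by (auto simp: Bf_def)
  have kF: "k \<in> carrier F" using k orb_sub[OF f] by auto
  have L: "Lop j (AvL f X v) = (\<Sum>a\<in>carrier G. sc (nGinv * inverse (\<tau> a (inv\<^bsub>G\<^esub> a) k) * \<tau> c0 a (lact (inv\<^bsub>G\<^esub> a) k))
      (Lop (c0 \<otimes>\<^bsub>G\<^esub> a, lact (inv\<^bsub>G\<^esub> a) k) (X (Lop (inv\<^bsub>G\<^esub> a, k) v))))"
  proof -
    have "Lop j (AvL f X v) = (\<Sum>a\<in>carrier G. \<Sum>h\<in>orb f. if h = k then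
        sc (nGinv * inverse (\<tau> a (inv\<^bsub>G\<^esub> a) h) * \<tau> c0 a (lact (inv\<^bsub>G\<^esub> a) h))
        (Lop (c0 \<otimes>\<^bsub>G\<^esub> a, lact (inv\<^bsub>G\<^esub> a) h) (X (Lop (inv\<^bsub>G\<^esub> a, h) v))) else 0)"
      unfolding AvL_def lin_sum[OF lin_Lop] lin_sc[OF lin_Lop]
    proof (intro sum.cong refl)
      fix a h assume a: "a \<in> carrier G" and h: "h \<in> orb f"
      have hF: "h \<in> carrier F" using h orb_sub[OF f] by auto
      have c: "lact a (lact (inv\<^bsub>G\<^esub> a) h) = h" using lact_inv_cancel2 a hF by auto
      have hF': "lact (inv\<^bsub>G\<^esub> a) h \<in> carrier F" using a hF lact_closed by auto
      show "sc (nGinv * inverse (\<tau> a (inv\<^bsub>G\<^esub> a) h)) (Lop j (Lop (a, lact (inv\<^bsub>G\<^esub> a) h) (X (Lop (inv\<^bsub>G\<^esub> a, h) v))))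
        = (if h = k then sc (nGinv * inverse (\<tau> a (inv\<^bsub>G\<^esub> a) h) * \<tau> c0 a (lact (inv\<^bsub>G\<^esub> a) h))
        (Lop (c0 \<otimes>\<^bsub>G\<^esub> a, lact (inv\<^bsub>G\<^esub> a) h) (X (Lop (inv\<^bsub>G\<^esub> a, h) v))) else 0)"
        using Lop_comp[OF c0 a hF', of k "X (Lop (inv\<^bsub>G\<^esub> a, h) v)"] c
        by (auto simp: j V.scale_scale)
    qed
    also have "\<dots> = (\<Sum>a\<in>carrier G. sc (nGinv * inverse (\<tau> a (inv\<^bsub>G\<^esub> a) k) * \<tau> c0 a (lact (inv\<^bsub>G\<^esub> a) k))
      (Lop (c0 \<otimes>\<^bsub>G\<^esub> a, lact (inv\<^bsub>G\<^esub> a) k) (X (Lop (inv\<^bsub>G\<^esub> a, k) v))))"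
      using k by (simp add: sum.delta' finite_orb)
    finally show ?thesis .
  qed
  have ck: "lact c0 k \<in> orb f" using orb_closed[OF f k c0] .
  have R: "AvL f X (Lop j v) = (\<Sum>b\<in>carrier G. sc (nGinv * inverse (\<tau> b (inv\<^bsub>G\<^esub> b) (lact c0 k)) * \<tau> (inv\<^bsub>G\<^esub> b) c0 k)
      (Lop (b, lact (inv\<^bsub>G\<^esub> b) (lact c0 k)) (X (Lop (inv\<^bsub>G\<^esub> b \<otimes>\<^bsub>G\<^esub> c0, k) v))))"
  proof -
    have "AvL f X (Lop j v) = (\<Sum>b\<in>carrier G. \<Sum>h\<in>orb f. if h = lact c0 k then
       sc (nGinv * inverse (\<tau> b (inv\<^bsub>G\<^esub> b) h) * \<tau> (inv\<^bsub>G\<^esub> b) c0 k)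
      (Lop (b, lact (inv\<^bsub>G\<^esub> b) h) (X (Lop (inv\<^bsub>G\<^esub> b \<otimes>\<^bsub>G\<^esub> c0, k) v))) else 0)"
      unfolding AvL_def
    proof (intro sum.cong refl)
      fix b h assume b: "b \<in> carrier G" and h: "h \<in> orb f"
      have ib: "inv\<^bsub>G\<^esub> b \<in> carrier G" using b by simp
      have e: "Lop (inv\<^bsub>G\<^esub> b, h) (Lop j v) = sc (if h = lact c0 k then \<tau> (inv\<^bsub>G\<^esub> b) c0 k else 0) (Lop (inv\<^bsub>G\<^esub> b \<otimes>\<^bsub>G\<^esub> c0, k) v)"
        using Lop_comp[OF ib c0 kF, of h v] by (simp add: j)
      show "sc (nGinv * inverse (\<tau> b (inv\<^bsub>G\<^esub> b) h)) (Lop (b, lact (inv\<^bsub>G\<^esub> b) h) (X (Lop (inv\<^bsub>G\<^esub> b, h) (Lop j v))))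
        = (if h = lact c0 k then sc (nGinv * inverse (\<tau> b (inv\<^bsub>G\<^esub> b) h) * \<tau> (inv\<^bsub>G\<^esub> b) c0 k)
      (Lop (b, lact (inv\<^bsub>G\<^esub> b) h) (X (Lop (inv\<^bsub>G\<^esub> b \<otimes>\<^bsub>G\<^esub> c0, k) v))) else 0)"
        unfolding e lin_sc[OF X] lin_sc[OF lin_Lop] by (simp add: V.scale_scale)
    qed
    also have "\<dots> = (\<Sum>b\<in>carrier G. sc (nGinv * inverse (\<tau> b (inv\<^bsub>G\<^esub> b) (lact c0 k)) * \<tau> (inv\<^bsub>G\<^esub> b) c0 k)
      (Lop (b, lact (inv\<^bsub>G\<^esub> b) (lact c0 k)) (X (Lop (inv\<^bsub>G\<^esub> b \<otimes>\<^bsub>G\<^esub> c0, k) v))))"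
      using ck by (simp add: sum.delta' finite_orb)
    finally show ?thesis .
  qed
  have "AvL f X (Lop j v) = (\<Sum>a\<in>carrier G. sc (nGinv * inverse (\<tau> (c0 \<otimes>\<^bsub>G\<^esub> a) (inv\<^bsub>G\<^esub> (c0 \<otimes>\<^bsub>G\<^esub> a)) (lact c0 k)) * \<tau> (inv\<^bsub>G\<^esub> (c0 \<otimes>\<^bsub>G\<^esub> a)) c0 k)
      (Lop (c0 \<otimes>\<^bsub>G\<^esub> a, lact (inv\<^bsub>G\<^esub> (c0 \<otimes>\<^bsub>G\<^esub> a)) (lact c0 k)) (X (Lop (inv\<^bsub>G\<^esub> (c0 \<otimes>\<^bsub>G\<^esub> a) \<otimes>\<^bsub>G\<^esub> c0, k) v))))"
    unfolding R by (rule sum_G_lmult[OF c0])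
  also have "\<dots> = Lop j (AvL f X v)"
    unfolding L
  proof (intro sum.cong refl)
    fix a assume a: "a \<in> carrier G"
    have e: "inv\<^bsub>G\<^esub> (c0 \<otimes>\<^bsub>G\<^esub> a) \<otimes>\<^bsub>G\<^esub> c0 = inv\<^bsub>G\<^esub> a"
      using c0 a by (simp add: G.inv_mult_group G.m_assoc)
    have e2: "lact (inv\<^bsub>G\<^esub> (c0 \<otimes>\<^bsub>G\<^esub> a)) (lact c0 k) = lact (inv\<^bsub>G\<^esub> a) k"
      using e c0 a kF by (simp add: lact_mult[symmetric])
    show "sc (nGinv * inverse (\<tau> (c0 \<otimes>\<^bsub>G\<^esub> a) (inv\<^bsub>G\<^esub> (c0 \<otimes>\<^bsub>G\<^esub> a)) (lact c0 k)) * \<tau> (inv\<^bsub>G\<^esub> (c0 \<otimes>\<^bsub>G\<^esub> a)) c0 k)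
      (Lop (c0 \<otimes>\<^bsub>G\<^esub> a, lact (inv\<^bsub>G\<^esub> (c0 \<otimes>\<^bsub>G\<^esub> a)) (lact c0 k)) (X (Lop (inv\<^bsub>G\<^esub> (c0 \<otimes>\<^bsub>G\<^esub> a) \<otimes>\<^bsub>G\<^esub> c0, k) v)))
      = sc (nGinv * inverse (\<tau> a (inv\<^bsub>G\<^esub> a) k) * \<tau> c0 a (lact (inv\<^bsub>G\<^esub> a) k))
      (Lop (c0 \<otimes>\<^bsub>G\<^esub> a, lact (inv\<^bsub>G\<^esub> a) k) (X (Lop (inv\<^bsub>G\<^esub> a, k) v)))"
      unfolding e e2 using coefL[OF c0 a kF] by (simp add: mult.assoc)
  qed
  finally show ?thesis by simp
qed

lemma AvR_commR:
  assumes X: "lin X" and XC: "\<And>w. w \<in> CC f \<Longrightarrow> X w \<in> CC f" and v: "v \<in> CC f"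
  shows "Rop i (AvR f X v) = AvR f X (Rop i v)"
proof (cases "i \<in> Bf f")
  case False
  then show ?thesis using Rop_out[OF f AvR_CC[OF XC v] False] Rop_out[OF f v False] lin_zero[OF AvR_lin[OF X]] by simp
next
  case True
  then obtain c0 k0 where i: "i = (c0, k0)" and c0: "c0 \<in> carrier G" and k0: "k0 \<in> orb f"
    by (auto simp: Bf_def)
  have k0F: "k0 \<in> carrier F" using k0 orb_sub[OF f] by auto
  have ck: "lact c0 k0 \<in> orb f" using orb_closed[OF f k0 c0] .
  have L: "Rop i (AvR f X v) = (\<Sum>a\<in>carrier G. sc (nGinv * inverse (\<tau> (inv\<^bsub>G\<^esub> a) a (lact c0 k0)) * \<tau> a c0 k0)
      (Rop (a \<otimes>\<^bsub>G\<^esub> c0, k0) (X (Rop (inv\<^bsub>G\<^esub> a, lact a (lact c0 k0)) v))))"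
  proof -
    have "Rop i (AvR f X v) = (\<Sum>a\<in>carrier G. \<Sum>k\<in>orb f. if k = lact c0 k0 then
        sc (nGinv * inverse (\<tau> (inv\<^bsub>G\<^esub> a) a k) * \<tau> a c0 k0)
        (Rop (a \<otimes>\<^bsub>G\<^esub> c0, k0) (X (Rop (inv\<^bsub>G\<^esub> a, lact a k) v))) else 0)"
      unfolding AvR_def lin_sum[OF lin_Rop] lin_sc[OF lin_Rop]
    proof (intro sum.cong refl)
      fix a k assume a: "a \<in> carrier G" and k: "k \<in> orb f"
      have ZC: "X (Rop (inv\<^bsub>G\<^esub> a, lact a k) v) \<in> CC f" using XC Rop_CC[OF f v] by auto
      show "sc (nGinv * inverse (\<tau> (inv\<^bsub>G\<^esub> a) a k)) (Rop i (Rop (a, k) (X (Rop (inv\<^bsub>G\<^esub> a, lact a k) v))))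
        = (if k = lact c0 k0 then sc (nGinv * inverse (\<tau> (inv\<^bsub>G\<^esub> a) a k) * \<tau> a c0 k0)
        (Rop (a \<otimes>\<^bsub>G\<^esub> c0, k0) (X (Rop (inv\<^bsub>G\<^esub> a, lact a k) v))) else 0)"
        using Rop_comp[OF f c0 a k0F ZC, where k'=k] by (auto simp: i V.scale_scale)
    qed
    also have "\<dots> = (\<Sum>a\<in>carrier G. sc (nGinv * inverse (\<tau> (inv\<^bsub>G\<^esub> a) a (lact c0 k0)) * \<tau> a c0 k0)
      (Rop (a \<otimes>\<^bsub>G\<^esub> c0, k0) (X (Rop (inv\<^bsub>G\<^esub> a, lact a (lact c0 k0)) v))))"
      using ck by (simp add: sum.delta' finite_orb)
    finally show ?thesis .
  qed
  have R: "AvR f X (Rop i v) = (\<Sum>b\<in>carrier G. sc (nGinv * inverse (\<tau> (inv\<^bsub>G\<^esub> b) b k0) * \<tau> c0 (inv\<^bsub>G\<^esub> b) (lact b k0))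
      (Rop (b, k0) (X (Rop (c0 \<otimes>\<^bsub>G\<^esub> inv\<^bsub>G\<^esub> b, lact b k0) v))))"
  proof -
    have "AvR f X (Rop i v) = (\<Sum>b\<in>carrier G. \<Sum>k\<in>orb f. if k = k0 then
       sc (nGinv * inverse (\<tau> (inv\<^bsub>G\<^esub> b) b k) * \<tau> c0 (inv\<^bsub>G\<^esub> b) (lact b k))
      (Rop (b, k) (X (Rop (c0 \<otimes>\<^bsub>G\<^esub> inv\<^bsub>G\<^esub> b, lact b k) v))) else 0)"
      unfolding AvR_def
    proof (intro sum.cong refl)
      fix b k assume b: "b \<in> carrier G" and k: "k \<in> orb f"
      have kF: "k \<in> carrier F" using k orb_sub[OF f] by auto
      have ib: "inv\<^bsub>G\<^esub> b \<in> carrier G" using b by simp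
      have bk: "lact b k \<in> carrier F" using b kF lact_closed by auto
      have cc: "(k0 = lact (inv\<^bsub>G\<^esub> b) (lact b k)) = (k = k0)" using lact_inv_cancel[OF b kF] by auto
      have e: "Rop (inv\<^bsub>G\<^esub> b, lact b k) (Rop i v) = sc (if k = k0 then \<tau> c0 (inv\<^bsub>G\<^esub> b) (lact b k) else 0) (Rop (c0 \<otimes>\<^bsub>G\<^esub> inv\<^bsub>G\<^esub> b, lact b k) v)"
        using Rop_comp[OF f ib c0 bk v, where k'=k0] cc by (simp add: i)
      show "sc (nGinv * inverse (\<tau> (inv\<^bsub>G\<^esub> b) b k)) (Rop (b, k) (X (Rop (inv\<^bsub>G\<^esub> b, lact b k) (Rop i v))))
        = (if k = k0 then sc (nGinv * inverse (\<tau> (inv\<^bsub>G\<^esub> b) b k) * \<tau> c0 (inv\<^bsub>G\<^esub> b) (lact b k))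
      (Rop (b, k) (X (Rop (c0 \<otimes>\<^bsub>G\<^esub> inv\<^bsub>G\<^esub> b, lact b k) v))) else 0)"
        unfolding e lin_sc[OF X] lin_sc[OF lin_Rop] by (simp add: V.scale_scale)
    qed
    also have "\<dots> = (\<Sum>b\<in>carrier G. sc (nGinv * inverse (\<tau> (inv\<^bsub>G\<^esub> b) b k0) * \<tau> c0 (inv\<^bsub>G\<^esub> b) (lact b k0))
      (Rop (b, k0) (X (Rop (c0 \<otimes>\<^bsub>G\<^esub> inv\<^bsub>G\<^esub> b, lact b k0) v))))"
      using k0 by (simp add: sum.delta' finite_orb)
    finally show ?thesis .
  qed
  have "AvR f X (Rop i v) = (\<Sum>a\<in>carrier G. sc (nGinv * inverse (\<tau> (inv\<^bsub>G\<^esub> (a \<otimes>\<^bsub>G\<^esub> c0)) (a \<otimes>\<^bsub>G\<^esub> c0) k0) * \<tau> c0 (inv\<^bsub>G\<^esub> (a \<otimes>\<^bsub>G\<^esub> c0)) (lact (a \<otimes>\<^bsub>G\<^esub> c0) k0))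
      (Rop (a \<otimes>\<^bsub>G\<^esub> c0, k0) (X (Rop (c0 \<otimes>\<^bsub>G\<^esub> inv\<^bsub>G\<^esub> (a \<otimes>\<^bsub>G\<^esub> c0), lact (a \<otimes>\<^bsub>G\<^esub> c0) k0) v))))"
    unfolding R by (rule sum_G_rmult[OF c0])
  also have "\<dots> = Rop i (AvR f X v)"
    unfolding L
  proof (intro sum.cong refl)
    fix a assume a: "a \<in> carrier G"
    have e: "c0 \<otimes>\<^bsub>G\<^esub> inv\<^bsub>G\<^esub> (a \<otimes>\<^bsub>G\<^esub> c0) = inv\<^bsub>G\<^esub> a"
      using c0 a by (simp add: G.inv_mult_group G.m_assoc[symmetric])
    have e2: "lact (a \<otimes>\<^bsub>G\<^esub> c0) k0 = lact a (lact c0 k0)"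
      using c0 a k0F by (simp add: lact_mult)
    show "sc (nGinv * inverse (\<tau> (inv\<^bsub>G\<^esub> (a \<otimes>\<^bsub>G\<^esub> c0)) (a \<otimes>\<^bsub>G\<^esub> c0) k0) * \<tau> c0 (inv\<^bsub>G\<^esub> (a \<otimes>\<^bsub>G\<^esub> c0)) (lact (a \<otimes>\<^bsub>G\<^esub> c0) k0))
      (Rop (a \<otimes>\<^bsub>G\<^esub> c0, k0) (X (Rop (c0 \<otimes>\<^bsub>G\<^esub> inv\<^bsub>G\<^esub> (a \<otimes>\<^bsub>G\<^esub> c0), lact (a \<otimes>\<^bsub>G\<^esub> c0) k0) v)))
      = sc (nGinv * inverse (\<tau> (inv\<^bsub>G\<^esub> a) a (lact c0 k0)) * \<tau> a c0 k0)
      (Rop (a \<otimes>\<^bsub>G\<^esub> c0, k0) (X (Rop (inv\<^bsub>G\<^esub> a, lact a (lact c0 k0)) v)))"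
      using coefR[OF a c0 k0F] unfolding e by (simp add: mult.assoc e2)
  qed
  finally show ?thesis by simp
qed

lemma AvL_commR:
  assumes X: "lin X" and XC: "\<And>w. w \<in> CC f \<Longrightarrow> X w \<in> CC f"
    and XR: "\<And>w i. w \<in> CC f \<Longrightarrow> Rop i (X w) = X (Rop i w)" and v: "v \<in> CC f"
  shows "Rop i (AvL f X v) = AvL f X (Rop i v)"
  unfolding AvL_def lin_sum[OF lin_Rop] lin_sc[OF lin_Rop]
proof (intro sum.cong refl arg_cong[where f="sc _"])
  fix a h
  have w1: "Lop (inv\<^bsub>G\<^esub> a, h) v \<in> CC f" using Lop_CC[OF f v] .
  show "Rop i (Lop (a, lact (inv\<^bsub>G\<^esub> a) h) (X (Lop (inv\<^bsub>G\<^esub> a, h) v)))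
      = Lop (a, lact (inv\<^bsub>G\<^esub> a) h) (X (Lop (inv\<^bsub>G\<^esub> a, h) (Rop i v)))"
    using LR_comm[OF f XC[OF w1]] XR[OF w1] LR_comm[OF f v] by metis
qed

lemma AvR_commL:
  assumes X: "lin X" and XC: "\<And>w. w \<in> CC f \<Longrightarrow> X w \<in> CC f"
    and XL: "\<And>w j. w \<in> CC f \<Longrightarrow> Lop j (X w) = X (Lop j w)" and v: "v \<in> CC f"
  shows "Lop j (AvR f X v) = AvR f X (Lop j v)"
  unfolding AvR_def lin_sum[OF lin_Lop] lin_sc[OF lin_Lop]
proof (intro sum.cong refl arg_cong[where f="sc _"])
  fix a k
  have w1: "Rop (inv\<^bsub>G\<^esub> a, lact a k) v \<in> CC f" using Rop_CC[OF f v] .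
  show "Lop j (Rop (a, k) (X (Rop (inv\<^bsub>G\<^esub> a, lact a k) v)))
      = Rop (a, k) (X (Rop (inv\<^bsub>G\<^esub> a, lact a k) (Lop j v)))"
    using LR_comm[OF f XC[OF w1]] XL[OF w1] LR_comm[OF f v] by metis
qed

end
end



context matched_pair
begin

context fixes f assumes f: "f \<in> carrier F"
begin

lemma CC_fs: "c \<in> CC f \<Longrightarrow> finite (supp c) \<and> supp c \<subseteq> carrier G \<times> UNIV"
  using finite_Bf[of f] by (auto simp: Bf_def intro: finite_subset)

lemma CC_Hspace: "(CC f :: ('g \<times> 'f \<Rightarrow> 'k) set) \<subseteq> Hspace F G"
  using orb_sub[OF f] finite_Bf[of f] by (auto simp: Hspace_def fin_fun_def Bf_def intro: finite_subset)

lemma CC_span: "(CC f :: ('g \<times> 'f \<Rightarrow> 'k) set) \<subseteq> V.span (bvec ` Bf f)"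
  by (simp add: supp_finite_span[OF finite_Bf])

lemma maschke:
  assumes S: "subcoalgebra (Hspace F G) (Hcomul F G lact \<tau>) S" and SC: "S \<subseteq> CC f"
    and nG: "(of_nat (card (carrier G)) :: 'k) \<noteq> 0"
  shows "\<exists>P. lin P \<and> (\<forall>c. P c \<in> S) \<and> (\<forall>s\<in>S. P s = s)
     \<and> (\<forall>c\<in>CC f. \<forall>j. Lop j (P c) = P (Lop j c)) \<and> (\<forall>c\<in>CC f. \<forall>i. Rop i (P c) = P (Rop i c))"
proof -
  have Ss: "V.subspace S" using S by (simp add: subcoalgebra_def lsubspace_eq)
  have SL: "\<And>j s. s \<in> S \<Longrightarrow> Lop j s \<in> S" and SR: "\<And>i s. s \<in> S \<Longrightarrow> Rop i s \<in> S"
    using subcoalg_Lop[OF S] by auto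
  obtain p where p: "lin p" "\<And>w. p w \<in> S" "\<And>s. s \<in> S \<Longrightarrow> p s = s"
    using proj_exists[OF Ss] by blast
  define X where "X = AvL f p"
  have X: "lin X" "\<And>w. X w \<in> S" "\<And>s. s \<in> S \<Longrightarrow> X s = s"
    unfolding X_def using AvL_lin[OF p(1)] AvL_S[OF f Ss p(2) SL] AvL_id[OF f Ss SC p(3) SL nG] by auto
  have XC: "\<And>w. w \<in> CC f \<Longrightarrow> X w \<in> CC f" using X(2) SC by auto
  have XL: "\<And>w j. w \<in> CC f \<Longrightarrow> Lop j (X w) = X (Lop j w)"
    unfolding X_def using AvL_commL[OF f p(1)] by auto
  define P where "P = AvR f X"
  have "lin P" unfolding P_def by (rule AvR_lin[OF X(1)])
  moreover have "\<forall>c. P c \<in> S" unfolding P_def using AvR_S[OF f Ss X(2) SR] by auto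
  moreover have "\<forall>s\<in>S. P s = s" unfolding P_def using AvR_id[OF f Ss SC X(3) SR nG] by auto
  moreover have "\<forall>c\<in>CC f. \<forall>j. Lop j (P c) = P (Lop j c)"
    unfolding P_def using AvR_commL[OF f X(1) XC XL] by auto
  moreover have "\<forall>c\<in>CC f. \<forall>i. Rop i (P c) = P (Rop i c)"
    unfolding P_def using AvR_commR[OF f X(1) XC] by auto
  ultimately show ?thesis by blast
qed

lemma Q_coalg:
  assumes Qlin: "lin Q" and QC: "\<And>c. c \<in> CC f \<Longrightarrow> Q c \<in> CC f"
    and QL: "\<And>c j. c \<in> CC f \<Longrightarrow> Lop j (Q c) = Q (Lop j c)"
    and QR: "\<And>c i. c \<in> CC f \<Longrightarrow> Rop i (Q c) = Q (Rop i c)"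
    and D: "subcoalgebra (Hspace F G) (Hcomul F G lact \<tau>) D" and DC: "D \<subseteq> CC f"
    and d: "d \<in> D" and idem: "Q (Q d) = Q d"
  shows "Hcomul F G lact \<tau> (Q d) \<in> V.span {tensor x y | x y. x \<in> Q ` D \<and> y \<in> Q ` D}"
proof -
  have dC: "d \<in> CC f" using d DC by auto
  have QdC: "Q d \<in> CC f" using QC[OF dC] .
  define \<Phi> :: "(('g \<times> 'f) \<times> ('g \<times> 'f) \<Rightarrow> 'k) \<Rightarrow> (('g \<times> 'f) \<times> ('g \<times> 'f) \<Rightarrow> 'k)" where
    "\<Phi> = (\<lambda>T ij. Q (\<lambda>i'. Q (\<lambda>j'. T (i', j')) (snd ij)) (fst ij))"
  have eq: "Hcomul F G lact \<tau> (Q d) = \<Phi> (Hcomul F G lact \<tau> d)"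
  proof (rule ext)
    fix ij :: "('g \<times> 'f) \<times> ('g \<times> 'f)"
    obtain i j where ij: "ij = (i, j)" by (cases ij)
    have "Hcomul F G lact \<tau> (Q d) (i, j) = Lop j (Q (Q d)) i"
      using Hcomul_coord[of "Q d" i j] CC_fs[OF QdC] idem by simp
    also have "\<dots> = Q (Lop j (Q d)) i" using QL[OF QdC] by simp
    also have "Lop j (Q d) = (\<lambda>i'. Q (Rop i' d) j)"
    proof
      fix i'
      from fun_cong[OF QR[OF dC, of i'], of j] show "Lop j (Q d) i' = Q (Rop i' d) j"
        by (simp add: Rop_def)
    qed
    also have "(\<lambda>i'. Q (Rop i' d) j) = (\<lambda>i'. Q (\<lambda>j'. Hcomul F G lact \<tau> d (i', j')) j)"
      using Hcomul_coord[of d] CC_fs[OF dC] by (simp add: Rop_def)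
    finally show "Hcomul F G lact \<tau> (Q d) ij = \<Phi> (Hcomul F G lact \<tau> d) ij"
      by (simp add: \<Phi>_def ij)
  qed
  have linPhi: "lin \<Phi>"
    unfolding lin_def
  proof (intro conjI allI)
    fix T1 T2 :: "('g \<times> 'f) \<times> ('g \<times> 'f) \<Rightarrow> 'k"
    show "\<Phi> (T1 + T2) = \<Phi> T1 + \<Phi> T2"
    proof
      fix ij :: "('g \<times> 'f) \<times> ('g \<times> 'f)"
      have a: "(\<lambda>j'. (T1 + T2) (i', j')) = (\<lambda>j'. T1 (i', j')) + (\<lambda>j'. T2 (i', j'))" for i'
        by (simp add: fun_eq_iff)
      have b: "(\<lambda>i'. Q (\<lambda>j'. (T1 + T2) (i', j')) (snd ij))
          = (\<lambda>i'. Q (\<lambda>j'. T1 (i', j')) (snd ij)) + (\<lambda>i'. Q (\<lambda>j'. T2 (i', j')) (snd ij))"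
        by (simp only: a lin_add[OF Qlin]) (simp add: fun_eq_iff)
      have "\<Phi> (T1 + T2) ij = Q (\<lambda>i'. Q (\<lambda>j'. (T1 + T2) (i', j')) (snd ij)) (fst ij)"
        by (simp only: \<Phi>_def)
      also have "\<dots> = Q ((\<lambda>i'. Q (\<lambda>j'. T1 (i', j')) (snd ij)) + (\<lambda>i'. Q (\<lambda>j'. T2 (i', j')) (snd ij))) (fst ij)"
        by (simp only: b)
      also have "\<dots> = (\<Phi> T1 + \<Phi> T2) ij"
        by (simp only: lin_add[OF Qlin] \<Phi>_def plus_fun_apply)
      finally show "\<Phi> (T1 + T2) ij = (\<Phi> T1 + \<Phi> T2) ij" .
    qed
  next
    fix c and T :: "('g \<times> 'f) \<times> ('g \<times> 'f) \<Rightarrow> 'k"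
    show "\<Phi> (sc c T) = sc c (\<Phi> T)"
    proof
      fix ij :: "('g \<times> 'f) \<times> ('g \<times> 'f)"
      have a: "(\<lambda>j'. sc c T (i', j')) = sc c (\<lambda>j'. T (i', j'))" for i'
        by (simp add: fun_eq_iff)
      have b: "(\<lambda>i'. Q (\<lambda>j'. sc c T (i', j')) (snd ij)) = sc c (\<lambda>i'. Q (\<lambda>j'. T (i', j')) (snd ij))"
        by (simp only: a lin_sc[OF Qlin]) (simp add: fun_eq_iff)
      have "\<Phi> (sc c T) ij = Q (\<lambda>i'. Q (\<lambda>j'. sc c T (i', j')) (snd ij)) (fst ij)"
        by (simp only: \<Phi>_def)
      also have "\<dots> = Q (sc c (\<lambda>i'. Q (\<lambda>j'. T (i', j')) (snd ij))) (fst ij)"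
        by (simp only: b)
      also have "\<dots> = sc c (\<Phi> T) ij"
        by (simp only: lin_sc[OF Qlin] \<Phi>_def sc_apply)
      finally show "\<Phi> (sc c T) ij = sc c (\<Phi> T) ij" .
    qed
  qed
  have tens: "\<Phi> (tensor x y) = tensor (Q x) (Q y)" for x y
  proof
    fix ij :: "('g \<times> 'f) \<times> ('g \<times> 'f)"
    have a: "(\<lambda>j'. tensor x y (i', j')) = sc (x i') y" for i' by (simp add: tensor_def fun_eq_iff)
    have b: "(\<lambda>i'. Q (\<lambda>j'. tensor x y (i', j')) (snd ij)) = sc (Q y (snd ij)) x"
      by (simp only: a lin_sc[OF Qlin]) (simp add: fun_eq_iff mult.commute)
    have "\<Phi> (tensor x y) ij = Q (\<lambda>i'. Q (\<lambda>j'. tensor x y (i', j')) (snd ij)) (fst ij)"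
      by (simp only: \<Phi>_def)
    also have "\<dots> = Q (sc (Q y (snd ij)) x) (fst ij)" by (simp only: b)
    also have "\<dots> = tensor (Q x) (Q y) ij"
      by (simp add: lin_sc[OF Qlin] tensor_def case_prod_beta mult.commute)
    finally show "\<Phi> (tensor x y) ij = tensor (Q x) (Q y) ij" .
  qed
  have T: "Hcomul F G lact \<tau> d \<in> V.span {tensor x y | x y. x \<in> D \<and> y \<in> D}"
    using D d by (simp add: subcoalgebra_def lspan_eq)
  have "\<Phi> ` {tensor x y | x y. x \<in> D \<and> y \<in> D} \<subseteq> {tensor x y | x y. x \<in> Q ` D \<and> y \<in> Q ` D}"
    using tens by auto
  then show ?thesis
    unfolding eq using lin_span_image[OF linPhi T] V.span_mono by blast
qed

end
end



lemma zero_fun_set: "{\<lambda>_. 0} = {0 :: 'a \<Rightarrow> 'b::zero}" by (simp add: zero_fun_def)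

context matched_pair
begin

abbreviation SCo where "SCo E \<equiv> subcoalgebra (Hspace F G) (Hcomul F G lact \<tau>) E"

lemma SCo_subspace: "SCo E \<Longrightarrow> V.subspace E"
  by (simp add: subcoalgebra_def lsubspace_eq)

context fixes f assumes f: "f \<in> carrier F"
begin

lemma decomp:
  assumes nG: "(of_nat (card (carrier G)) :: 'k) \<noteq> 0"
  shows "SCo D \<Longrightarrow> D \<subseteq> CC f \<Longrightarrow> \<exists>\<S>. (\<forall>S\<in>\<S>. simple_subcoalgebra (Hspace F G) (Hcomul F G lact \<tau>) S)
     \<and> D = lspan (\<Union>\<S>) \<and> (\<forall>S\<in>\<S>. S \<inter> lspan (\<Union>(\<S> - {S})) = {\<lambda>_. 0})"
proof (induction "V.dim D" arbitrary: D rule: less_induct)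
  case less
  note IH = less.hyps and D = less.prems(1) and DC = less.prems(2)
  have Ds: "V.subspace D" using SCo_subspace[OF D] .
  show ?case
  proof (cases "D = {0}")
    case True
    then show ?thesis by (intro exI[of _ "{}"]) (simp add: lspan_eq zero_fun_set)
  next
    case False
    define N where "N = {E. SCo E \<and> E \<subseteq> D \<and> E \<noteq> {0}}"
    have "D \<in> N" using D False by (simp add: N_def)
    then obtain S where S: "S \<in> N" and Smin: "\<And>E. E \<in> N \<Longrightarrow> V.dim S \<le> V.dim E"
      using ex_has_least_nat[of "\<lambda>E. E \<in> N" D V.dim] by blast
    have SS: "SCo S" "S \<subseteq> D" "S \<noteq> {0}" using S by (auto simp: N_def)
    have SC: "S \<subseteq> CC f" using SS(2) DC by auto
    have Ss: "V.subspace S" using SCo_subspace[OF SS(1)] .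
    have Ssimple: "simple_subcoalgebra (Hspace F G) (Hcomul F G lact \<tau>) S"
      unfolding simple_subcoalgebra_def zero_fun_set
    proof (intro conjI allI impI SS(1) SS(3))
      fix E assume E: "SCo E \<and> E \<subseteq> S"
      show "E = {0} \<or> E = S"
      proof (rule ccontr)
        assume "\<not> (E = {0} \<or> E = S)"
        then have "E \<in> N" "E \<noteq> S" using E SS(2) by (auto simp: N_def)
        have Sspan: "S \<subseteq> V.span (bvec ` Bf f)" using SC CC_span[OF f] by auto
        have "V.dim E < V.dim S"
          using dim_strict[OF SCo_subspace[of E] Ss _ \<open>E \<noteq> S\<close> Sspan finite_imageI[OF finite_Bf]] E
          by auto
        then show False using Smin[OF \<open>E \<in> N\<close>] by simp
      qed
    qed
    obtain P where P: "lin P" "\<And>c. P c \<in> S" "\<And>s. s \<in> S \<Longrightarrow> P s = s"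
      "\<And>c j. c \<in> CC f \<Longrightarrow> Lop j (P c) = P (Lop j c)" "\<And>c i. c \<in> CC f \<Longrightarrow> Rop i (P c) = P (Rop i c)"
      using maschke[OF f SS(1) SC nG] by blast
    define Q where "Q = (\<lambda>c. c - P c)"
    have Qlin: "lin Q" unfolding Q_def by (rule lin_sub[OF lin_id P(1)])
    have PP: "P (P c) = P c" for c using P(2,3) by auto
    have QC: "Q c \<in> CC f" if "c \<in> CC f" for c
      unfolding Q_def using V.subspace_diff[OF CC_subspace[OF f] that] P(2) SC by auto
    have QL: "Lop j (Q c) = Q (Lop j c)" if "c \<in> CC f" for c j
      unfolding Q_def using P(4)[OF that] lin_diff[OF lin_Lop] by simp
    have QR: "Rop i (Q c) = Q (Rop i c)" if "c \<in> CC f" for c i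
      unfolding Q_def using P(5)[OF that] lin_diff[OF lin_Rop] by simp
    have PQ: "P (Q c) = 0" for c unfolding Q_def using lin_diff[OF P(1)] PP by simp
    have Qidem: "Q (Q c) = Q c" for c using PQ by (simp add: Q_def)
    define E where "E = Q ` D"
    have ED: "E \<subseteq> D" unfolding E_def Q_def using V.subspace_diff[OF Ds] P(2) SS(2) by auto
    have Es: "V.subspace E"
      unfolding V.subspace_def E_def
    proof (intro conjI ballI allI)
      show "0 \<in> Q ` D" using lin_zero[OF Qlin] V.subspace_0[OF Ds] by (metis image_eqI)
      fix x y assume "x \<in> Q ` D" "y \<in> Q ` D"
      then obtain d1 d2 where "d1 \<in> D" "d2 \<in> D" "x = Q d1" "y = Q d2" by auto
      then show "x + y \<in> Q ` D" using lin_add[OF Qlin, of d1 d2] V.subspace_add[OF Ds] by (metis image_eqI)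
    next
      fix c x assume "x \<in> Q ` D"
      then obtain d1 where "d1 \<in> D" "x = Q d1" by auto
      then show "sc c x \<in> Q ` D" using lin_sc[OF Qlin, of c d1] V.subspace_scale[OF Ds] by (metis image_eqI)
    qed
    have DH: "D \<subseteq> Hspace F G" using D by (simp add: subcoalgebra_def)
    have ESC: "SCo E"
      unfolding subcoalgebra_def lsubspace_eq lspan_eq
    proof (intro conjI ballI Es)
      show "E \<subseteq> Hspace F G" using ED DH by auto
      fix e assume "e \<in> E"
      then obtain d where d: "d \<in> D" "e = Q d" by (auto simp: E_def)
      show "Hcomul F G lact \<tau> e \<in> V.span {tensor x y |x y. x \<in> E \<and> y \<in> E}"
        using Q_coalg[where Q=Q and D=D and d=d, OF f Qlin QC QL QR D DC d(1) Qidem]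
        unfolding d(2) E_def .
    qed
    have SE0: "S \<inter> E = {0}"
    proof
      show "S \<inter> E \<subseteq> {0}"
      proof
        fix x assume x: "x \<in> S \<inter> E"
        then obtain d where "x = Q d" by (auto simp: E_def)
        then have "P x = 0" using PQ by simp
        moreover have "P x = x" using x P(3) by auto
        ultimately show "x \<in> {0}" by simp
      qed
      show "{0} \<subseteq> S \<inter> E" using V.subspace_0[OF Ss] V.subspace_0[OF Es] by auto
    qed
    have EneD: "E \<noteq> D"
    proof
      assume "E = D"
      then have "S = {0}" using SE0 SS(2) by auto
      then show False using SS(3) by simp
    qed
    have Dspan: "D \<subseteq> V.span (bvec ` Bf f)" using DC CC_span[OF f] by auto
    have dimE: "V.dim E < V.dim D"
      using dim_strict[OF Es Ds ED EneD Dspan finite_imageI[OF finite_Bf]] by auto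
    have EC: "E \<subseteq> CC f" using ED DC by auto
    obtain S' where S': "\<forall>T\<in>S'. simple_subcoalgebra (Hspace F G) (Hcomul F G lact \<tau>) T"
      "E = lspan (\<Union>S')" "\<forall>T\<in>S'. T \<inter> lspan (\<Union>(S' - {T})) = {\<lambda>_. 0}"
      using IH[OF dimE ESC EC] by blast
    have TE: "T \<subseteq> E" if "T \<in> S'" for T
      using S'(2) that V.span_superset unfolding lspan_eq by blast
    have Ts: "V.subspace T" if "T \<in> S'" for T
      using S'(1) that SCo_subspace by (auto simp: simple_subcoalgebra_def)
    have SnotIn: "S \<notin> S'"
    proof
      assume "S \<in> S'"
      then have "S \<subseteq> E" using TE by auto
      then have "S = {0}" using SE0 by auto
      then show False using SS(3) by simp
    qed
    have spanS: "V.span S = S" using Ss by simp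
    have spanE: "V.span (\<Union>S') = E" using S'(2) by (simp add: lspan_eq)
    show ?thesis
    proof (intro exI[of _ "insert S S'"] conjI ballI)
      fix T assume "T \<in> insert S S'"
      then show "simple_subcoalgebra (Hspace F G) (Hcomul F G lact \<tau>) T" using Ssimple S'(1) by auto
    next
      have "lspan (\<Union>(insert S S')) = {x + y | x y. x \<in> S \<and> y \<in> E}"
        by (simp add: lspan_eq V.span_Un spanS spanE)
      also have "\<dots> = D"
      proof
        show "{x + y | x y. x \<in> S \<and> y \<in> E} \<subseteq> D"
          using SS(2) ED V.subspace_add[OF Ds] by auto
        show "D \<subseteq> {x + y | x y. x \<in> S \<and> y \<in> E}"
        proof
          fix d assume "d \<in> D"
          then have "d = P d + Q d" "P d \<in> S" "Q d \<in> E" using P(2) by (auto simp: Q_def E_def)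
          then show "d \<in> {x + y | x y. x \<in> S \<and> y \<in> E}" by blast
        qed
      qed
      finally show "D = lspan (\<Union>(insert S S'))" by simp
    next
      fix T assume T: "T \<in> insert S S'"
      show "T \<inter> lspan (\<Union>(insert S S' - {T})) = {\<lambda>_. 0}"
      proof (cases "T = S")
        case True
        then have "insert S S' - {T} = S'" using SnotIn by auto
        then show ?thesis using True SE0 spanE by (simp add: lspan_eq zero_fun_set)
      next
        case False
        then have TS': "T \<in> S'" using T by auto
        have eq: "insert S S' - {T} = insert S (S' - {T})" using False by auto
        have sp: "V.span (\<Union>(S' - {T})) \<subseteq> E"
          using V.span_mono[of "\<Union>(S' - {T})" "\<Union>S'"] spanE by auto
        show ?thesis unfolding eq zero_fun_set
        proof
          show "T \<inter> lspan (\<Union>(insert S (S' - {T}))) \<subseteq> {0}"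
          proof
            fix t assume t: "t \<in> T \<inter> lspan (\<Union>(insert S (S' - {T})))"
            then obtain x y where xy: "t = x + y" "x \<in> S" "y \<in> V.span (\<Union>(S' - {T}))"
              by (auto simp: lspan_eq V.span_Un spanS)
            have tE: "t \<in> E" using t TE[OF TS'] by auto
            have "x = t - y" using xy by simp
            then have "x \<in> E" using V.subspace_diff[OF Es tE] sp xy(3) by auto
            then have "x = 0" using SE0 xy(2) by auto
            then have "t \<in> T \<inter> lspan (\<Union>(S' - {T}))" using t xy by (simp add: lspan_eq)
            then show "t \<in> {0}" using S'(3) TS' by (simp add: zero_fun_set)
          qed
          show "{0} \<subseteq> T \<inter> lspan (\<Union>(insert S (S' - {T})))"
            using V.subspace_0[OF Ts[OF TS']] V.span_zero by (auto simp: lspan_eq)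
        qed
      qed
    qed
  qed
qed

end
end



lemma tensor_expand:
  fixes T :: "'i \<times> 'i \<Rightarrow> 'k::field"
  assumes B: "finite B" and T: "\<And>i j. T (i, j) \<noteq> 0 \<Longrightarrow> i \<in> B \<and> j \<in> B"
  shows "T = (\<Sum>p\<in>B \<times> B. sc (T p) (tensor (bvec (fst p)) (bvec (snd p))))"
proof
  fix q :: "'i \<times> 'i"
  obtain i0 j0 where q: "q = (i0, j0)" by (cases q)
  have "(\<Sum>p\<in>B \<times> B. sc (T p) (tensor (bvec (fst p)) (bvec (snd p)))) q
      = (\<Sum>p\<in>B \<times> B. if p = q then T q else 0)"
    unfolding sum_fun_apply by (rule sum.cong) (auto simp: tensor_def bvec_def q)
  also have "\<dots> = T q" using B T[of i0 j0] by (auto simp: sum.delta' q)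
  finally show "T q = (\<Sum>p\<in>B \<times> B. sc (T p) (tensor (bvec (fst p)) (bvec (snd p)))) q" by simp
qed

context matched_pair
begin

context fixes f assumes f: "f \<in> carrier F"
begin

lemma Hcomul_supp: assumes c: "c \<in> CC f" and nz: "Hcomul F G lact \<tau> c (i, j) \<noteq> 0"
  shows "i \<in> Bf f \<and> j \<in> Bf f"
proof -
  have e: "Hcomul F G lact \<tau> c (i, j) = Lop j c i" using Hcomul_coord CC_fs[OF f c] by auto
  have "j \<in> Bf f"
  proof (rule ccontr)
    assume "j \<notin> Bf f"
    then have "Lop j c = 0" by (rule Lop_out[OF f c])
    then show False using nz e by simp
  qed
  moreover have "i \<in> Bf f"
  proof -
    have "Lop j c i \<noteq> 0" using nz e by simp
    then show ?thesis using CC_in[OF f Lop_CC[OF f c, of j]] by blast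
  qed
  ultimately show ?thesis by simp
qed

lemma Hcomul_supp2: assumes c: "c \<in> CC f" shows "supp (Hcomul F G lact \<tau> c) \<subseteq> Bf f \<times> Bf f"
proof
  fix p assume "p \<in> supp (Hcomul F G lact \<tau> c)"
  then have "Hcomul F G lact \<tau> c (fst p, snd p) \<noteq> 0" by (simp add: supp_def)
  then show "p \<in> Bf f \<times> Bf f" using Hcomul_supp[OF c, of "fst p" "snd p"] by (simp add: mem_Times_iff)
qed

lemma Hcomul_fin: "c \<in> CC f \<Longrightarrow> finite (supp (Hcomul F G lact \<tau> c))"
  using Hcomul_supp2 finite_Bf[of f] by (meson finite_SigmaI finite_subset)

lemma CC_SCo: "SCo (CC f)"
  unfolding subcoalgebra_def lsubspace_eq lspan_eq
proof (intro conjI ballI CC_Hspace[OF f] CC_subspace[OF f])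
  fix d :: "'g \<times> 'f \<Rightarrow> 'k" assume d: "d \<in> CC f"
  have "Hcomul F G lact \<tau> d = (\<Sum>p\<in>Bf f \<times> Bf f. sc (Hcomul F G lact \<tau> d p) (tensor (bvec (fst p)) (bvec (snd p))))"
    by (rule tensor_expand[OF finite_Bf]) (use Hcomul_supp[OF d] in auto)
  also have "\<dots> \<in> V.span {tensor x y |x y. x \<in> CC f \<and> y \<in> CC f}"
  proof (intro V.span_sum V.span_scale V.span_base)
    fix p assume "p \<in> Bf f \<times> Bf f"
    then have "bvec (fst p) \<in> CC f" "bvec (snd p) \<in> CC f"
      by (auto simp: supp_def bvec_def)
    then show "tensor (bvec (fst p)) (bvec (snd p)) \<in> {tensor x y |x y. x \<in> CC f \<and> y \<in> CC f}"
      by blast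
  qed
  finally show "Hcomul F G lact \<tau> d \<in> V.span {tensor x y |x y. x \<in> CC f \<and> y \<in> CC f}" .
qed

lemma cosemisimple_CC:
  assumes nG: "(of_nat (card (carrier G)) :: 'k) \<noteq> 0"
  shows "cosemisimple_subcoalgebra (Hspace F G) (Hcomul F G lact \<tau>) (CC f)"
  unfolding cosemisimple_subcoalgebra_def using CC_SCo decomp[OF f nG CC_SCo] by blast

lemma free_orb:
  assumes stab: "stabilizer G lact f = {\<one>\<^bsub>G\<^esub>}" and h: "h \<in> orb f"
    and x: "x \<in> carrier G" and g: "g \<in> carrier G" and eq: "lact x h = lact g h"
  shows "x = g"
proof -
  obtain y where y: "y \<in> carrier G" "h = lact y f" using h by (auto simp: orb_def)
  have gy: "g \<otimes>\<^bsub>G\<^esub> y \<in> carrier G" "x \<otimes>\<^bsub>G\<^esub> y \<in> carrier G" using g x y by auto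
  have "lact (x \<otimes>\<^bsub>G\<^esub> y) f = lact (g \<otimes>\<^bsub>G\<^esub> y) f" using eq y x g f by (simp add: lact_mult)
  then have "lact (inv\<^bsub>G\<^esub> (g \<otimes>\<^bsub>G\<^esub> y) \<otimes>\<^bsub>G\<^esub> (x \<otimes>\<^bsub>G\<^esub> y)) f = f"
    using gy f lact_inv_cancel[OF gy(1) f] by (simp add: lact_mult)
  then have "inv\<^bsub>G\<^esub> (g \<otimes>\<^bsub>G\<^esub> y) \<otimes>\<^bsub>G\<^esub> (x \<otimes>\<^bsub>G\<^esub> y) \<in> stabilizer G lact f"
    using gy by (auto simp: stabilizer_def)
  then have "inv\<^bsub>G\<^esub> (g \<otimes>\<^bsub>G\<^esub> y) \<otimes>\<^bsub>G\<^esub> (x \<otimes>\<^bsub>G\<^esub> y) = \<one>\<^bsub>G\<^esub>" using stab by auto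
  then have "x \<otimes>\<^bsub>G\<^esub> y = g \<otimes>\<^bsub>G\<^esub> y" using gy G.inv_equality G.inv_inv by (metis G.inv_closed)
  then show ?thesis using x g y by simp
qed

lemma simple_CC:
  assumes stab: "stabilizer G lact f = {\<one>\<^bsub>G\<^esub>}"
  shows "simple_subcoalgebra (Hspace F G) (Hcomul F G lact \<tau>) (CC f)"
  unfolding simple_subcoalgebra_def zero_fun_set
proof (intro conjI allI impI CC_SCo)
  have "(bvec (\<one>\<^bsub>G\<^esub>, f) :: 'g \<times> 'f \<Rightarrow> 'k) \<in> CC f" using orb_self[OF f]
    by (auto simp: supp_def bvec_def Bf_def)
  moreover have "bvec (\<one>\<^bsub>G\<^esub>, f) \<noteq> (0 :: 'g \<times> 'f \<Rightarrow> 'k)" by (auto simp: bvec_def fun_eq_iff)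
  ultimately show "(CC f :: ('g \<times> 'f \<Rightarrow> 'k) set) \<noteq> {0}" by auto
next
  fix E :: "('g \<times> 'f \<Rightarrow> 'k) set" assume E: "SCo E \<and> E \<subseteq> CC f"
  have Es: "V.subspace E" using E SCo_subspace by auto
  show "E = {0} \<or> E = CC f"
  proof (cases "E = {0}")
    case False
    then obtain d where d: "d \<in> E" "d \<noteq> 0" using V.subspace_0[OF Es] by auto
    then obtain q0 where q0: "d q0 \<noteq> 0" by (auto simp: fun_eq_iff)
    obtain g0 h0 where q0e: "q0 = (g0, h0)" by (cases q0)
    have dC: "d \<in> CC f" using d E by auto
    have g0: "g0 \<in> carrier G" and h0: "h0 \<in> orb f" using CC_in[OF f dC q0] q0e by (auto simp: Bf_def)
    have h0F: "h0 \<in> carrier F" using h0 orb_sub[OF f] by auto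
    have all: "bvec (g, h) \<in> E" if g: "g \<in> carrier G" and h: "h \<in> orb f" for g h
    proof -
      have hF: "h \<in> carrier F" using h orb_sub[OF f] by auto
      obtain y0 where y0: "y0 \<in> carrier G" "h0 = lact y0 f" using h0 by (auto simp: orb_def)
      obtain y where y: "y \<in> carrier G" "h = lact y f" using h by (auto simp: orb_def)
      define x0 where "x0 = y \<otimes>\<^bsub>G\<^esub> inv\<^bsub>G\<^esub> y0"
      have x0: "x0 \<in> carrier G" using y y0 by (simp add: x0_def)
      have x0h: "lact x0 h0 = h" using y y0 f
        by (simp add: x0_def lact_mult[symmetric] G.m_assoc)
      define a1 where "a1 = g0 \<otimes>\<^bsub>G\<^esub> inv\<^bsub>G\<^esub> x0 \<otimes>\<^bsub>G\<^esub> inv\<^bsub>G\<^esub> g"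
      have a1: "a1 \<in> carrier G" using g0 x0 g by (simp add: a1_def)
      have a1g: "a1 \<otimes>\<^bsub>G\<^esub> g \<otimes>\<^bsub>G\<^esub> x0 = g0" using g0 x0 g by (simp add: a1_def G.m_assoc)
      define c where "c = \<tau> a1 g h * (\<tau> (a1 \<otimes>\<^bsub>G\<^esub> g) x0 h0 * d (g0, h0))"
      have cnz: "c \<noteq> 0" using tau_nonzero a1 g hF x0 h0F q0 q0e by (simp add: c_def)
      have w: "Rop (a1, lact g h) (Lop (x0, h0) d) = sc c (bvec (g, h))"
      proof
        fix q :: "'g \<times> 'f"
        obtain x m where q: "q = (x, m)" by (cases q)
        show "Rop (a1, lact g h) (Lop (x0, h0) d) q = sc c (bvec (g, h)) q"
        proof (cases "x \<in> carrier G \<and> m = h \<and> lact g h = lact x m")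
          case True
          have mh: "m = h" and xG: "x \<in> carrier G" using True by simp_all
          have "lact x h = lact g h" using True mh by simp
          then have xg: "x = g" using free_orb[OF stab h xG g] by simp
          have "Rop (a1, lact g h) (Lop (x0, h0) d) (g, h) = \<tau> a1 g h * (\<tau> (a1 \<otimes>\<^bsub>G\<^esub> g) x0 h0 * d (a1 \<otimes>\<^bsub>G\<^esub> g \<otimes>\<^bsub>G\<^esub> x0, h0))"
            using a1 g x0 x0h by (simp add: Rop_def Lop_def)
          then show ?thesis by (simp add: q xg mh c_def bvec_def a1g)
        next
          case False
          then show ?thesis using x0h g by (auto simp: Rop_def Lop_def q bvec_def)
        qed
      qed
      have ESC: "SCo E" using E by simp
      have v: "Lop (x0, h0) d \<in> E" by (rule subcoalg_Lop(1)[OF ESC d(1)])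
      have "Rop (a1, lact g h) (Lop (x0, h0) d) \<in> E" by (rule subcoalg_Lop(2)[OF ESC v])
      then have "sc c (bvec (g, h)) \<in> E" by (simp only: w)
      then have "sc (inverse c) (sc c (bvec (g, h))) \<in> E" by (rule V.subspace_scale[OF Es])
      then show ?thesis using cnz by (simp add: V.scale_scale)
    qed
    have "CC f \<subseteq> E"
    proof -
      have "bvec ` Bf f \<subseteq> E" using all by (auto simp: Bf_def)
      then have "V.span (bvec ` Bf f) \<subseteq> E" using V.span_minimal[OF _ Es] by blast
      then show ?thesis using CC_span[OF f] by auto
    qed
    then show ?thesis using E by auto
  qed simp
qed

end
end



lemma expand_bvec:
  assumes "finite B" "supp h \<subseteq> B"
  shows "h = (\<Sum>i\<in>B. sc (h i) (bvec i))"
proof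
  fix j
  show "h j = (\<Sum>i\<in>B. sc (h i) (bvec i)) j"
    using assms by (auto simp: sum_fun_apply bvec_def supp_def sum_delta_mult)
qed

context matched_pair
begin

definition psi :: "'g \<times> 'f \<Rightarrow> 'g \<times> 'f" where
  "psi i = (inv\<^bsub>G\<^esub> (ract (fst i) (snd i)), inv\<^bsub>F\<^esub> (lact (fst i) (snd i)))"

definition acoef :: "'g \<times> 'f \<Rightarrow> 'k" where
  "acoef i = inverse (\<sigma> (inv\<^bsub>G\<^esub> (fst i)) (lact (fst i) (snd i)) (inv\<^bsub>F\<^esub> (lact (fst i) (snd i))))
     * inverse (\<tau> (inv\<^bsub>G\<^esub> (fst i)) (fst i) (snd i))"

lemma acoef_nz: "i \<in> carrier G \<times> carrier F \<Longrightarrow> acoef i \<noteq> 0"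
  using sigma_nonzero tau_nonzero lact_closed by (auto simp: acoef_def)

lemma Hantipode_fin:
  assumes "finite (supp c)" "supp c \<subseteq> A" "finite A"
  shows "Hantipode F G lact ract \<sigma> \<tau> c = (\<Sum>i\<in>A. sc (c i * acoef i) (bvec (psi i)))"
proof
  fix j
  have "Hantipode F G lact ract \<sigma> \<tau> c j = (\<Sum>i\<in>supp c. c i * (acoef i * bvec (psi i) j))"
    unfolding Hantipode_def lin_ext_def by (simp add: case_prod_beta acoef_def psi_def)
  also have "\<dots> = (\<Sum>i\<in>A. c i * (acoef i * bvec (psi i) j))"
    using assms by (intro sum.mono_neutral_left) (auto simp: supp_def)
  also have "\<dots> = (\<Sum>i\<in>A. sc (c i * acoef i) (bvec (psi i))) j"
    by (simp add: sum_fun_apply mult.assoc)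
  finally show "Hantipode F G lact ract \<sigma> \<tau> c j = (\<Sum>i\<in>A. sc (c i * acoef i) (bvec (psi i))) j" .
qed

lemma F_inv_lact:
  assumes g: "g \<in> carrier G" and h: "h \<in> carrier F"
  shows "inv\<^bsub>F\<^esub> (lact g h) = lact (ract g h) (inv\<^bsub>F\<^esub> h)"
proof -
  have "lact g h \<otimes>\<^bsub>F\<^esub> lact (ract g h) (inv\<^bsub>F\<^esub> h) = \<one>\<^bsub>F\<^esub>"
    using mp_lact[OF g h F.inv_closed[OF h]] lact_oneF[OF g] h by simp
  then have "inv\<^bsub>F\<^esub> (lact (ract g h) (inv\<^bsub>F\<^esub> h)) = lact g h"
    using F.inv_equality lact_closed ract_closed g h F.inv_closed by blast
  then show ?thesis
    by (metis F.inv_closed F.inv_inv g h lact_closed ract_closed)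
qed

lemma psi_inj: "inj_on psi (carrier G \<times> carrier F)"
proof (rule inj_onI)
  fix p q assume p: "p \<in> carrier G \<times> carrier F" and q: "q \<in> carrier G \<times> carrier F" and e: "psi p = psi q"
  obtain g h where ph: "p = (g, h)" by (cases p)
  obtain g' h' where qh: "q = (g', h')" by (cases q)
  have g: "g \<in> carrier G" "h \<in> carrier F" "g' \<in> carrier G" "h' \<in> carrier F" using p q ph qh by auto
  have v: "ract g h = ract g' h'"
    using e g ract_closed G.inv_inj unfolding ph qh psi_def by (auto dest: inj_onD)
  have u: "lact g h = lact g' h'"
    using e g lact_closed F.inv_inj unfolding ph qh psi_def by (auto dest: inj_onD)
  have hh: "inv\<^bsub>F\<^esub> x = lact (inv\<^bsub>G\<^esub> (ract a x)) (inv\<^bsub>F\<^esub> (lact a x))" if "a \<in> carrier G" "x \<in> carrier F" for a x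
    using F_inv_lact[OF that] lact_inv_cancel ract_closed that F.inv_closed by auto
  have "inv\<^bsub>F\<^esub> h = inv\<^bsub>F\<^esub> h'" using hh[of g h] hh[of g' h'] g u v by simp
  then have hh': "h = h'" using g by (metis F.inv_inv)
  have "g = ract (ract g h) (inv\<^bsub>F\<^esub> h)" using ract_inv_cancel g by simp
  also have "\<dots> = g'" using v hh' ract_inv_cancel g by simp
  finally show "p = q" using ph qh hh' by simp
qed

context fixes f assumes f: "f \<in> carrier F"
begin

lemma antipode_CC:
  "(Hantipode F G lact ract \<sigma> \<tau> ` CC f = CC f) \<longleftrightarrow> (\<exists>y\<in>carrier G. lact y f = inv\<^bsub>F\<^esub> f)"
proof
  assume eq: "Hantipode F G lact ract \<sigma> \<tau> ` CC f = CC f"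
  let ?b = "bvec (\<one>\<^bsub>G\<^esub>, f) :: 'g \<times> 'f \<Rightarrow> 'k"
  have bC: "?b \<in> CC f" using orb_self[OF f] by (auto simp: supp_def bvec_def Bf_def)
  have "Hantipode F G lact ract \<sigma> \<tau> ?b = (\<Sum>i\<in>{(\<one>\<^bsub>G\<^esub>, f)}. sc (?b i * acoef i) (bvec (psi i)))"
    by (rule Hantipode_fin) (auto simp: supp_def bvec_def)
  also have "\<dots> = sc (acoef (\<one>\<^bsub>G\<^esub>, f)) (bvec (psi (\<one>\<^bsub>G\<^esub>, f)))" by (simp add: bvec_def)
  finally have e1: "Hantipode F G lact ract \<sigma> \<tau> ?b = sc (acoef (\<one>\<^bsub>G\<^esub>, f)) (bvec (psi (\<one>\<^bsub>G\<^esub>, f)))" .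
  have "Hantipode F G lact ract \<sigma> \<tau> ?b \<in> CC f" using eq bC by blast
  then have "sc (acoef (\<one>\<^bsub>G\<^esub>, f)) (bvec (psi (\<one>\<^bsub>G\<^esub>, f))) \<in> CC f" by (simp only: e1)
  then have "psi (\<one>\<^bsub>G\<^esub>, f) \<in> Bf f"
    using acoef_nz[of "(\<one>\<^bsub>G\<^esub>, f)"] f by (auto simp: supp_def bvec_def)
  then have "inv\<^bsub>F\<^esub> f \<in> orb f" using f by (simp add: psi_def Bf_def lact_one)
  then show "\<exists>y\<in>carrier G. lact y f = inv\<^bsub>F\<^esub> f" by (auto simp: orb_def)
next
  assume "\<exists>y\<in>carrier G. lact y f = inv\<^bsub>F\<^esub> f"
  then obtain y0 where y0: "y0 \<in> carrier G" "lact y0 f = inv\<^bsub>F\<^esub> f" by auto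
  have orbinv: "inv\<^bsub>F\<^esub> h \<in> orb f" if hin: "h \<in> orb f" for h
  proof -
    obtain y where y: "y \<in> carrier G" "h = lact y f" using hin by (auto simp: orb_def)
    have "inv\<^bsub>F\<^esub> h = lact (ract y f) (lact y0 f)" using F_inv_lact[OF y(1) f] y y0 by simp
    also have "\<dots> = lact (ract y f \<otimes>\<^bsub>G\<^esub> y0) f" using y y0 f ract_closed by (simp add: lact_mult)
    finally show ?thesis using y y0 f ract_closed by (auto simp: orb_def)
  qed
  have psiB: "psi i \<in> Bf f" if "i \<in> Bf f" for i
    using that orbinv orb_closed[OF f] ract_closed orb_sub[OF f] by (auto simp: psi_def Bf_def)
  have BfGF: "Bf f \<subseteq> carrier G \<times> carrier F" using orb_sub[OF f] by (auto simp: Bf_def)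
  have injB: "inj_on psi (Bf f)" using inj_on_subset[OF psi_inj BfGF] .
  have psiBf: "psi ` Bf f = Bf f"
    using card_image[OF injB] psiB finite_Bf[of f] by (intro card_subset_eq) auto
  have formula: "Hantipode F G lact ract \<sigma> \<tau> c = (\<Sum>i\<in>Bf f. sc (c i * acoef i) (bvec (psi i)))"
    if "c \<in> CC f" for c :: "'g \<times> 'f \<Rightarrow> 'k"
    using that finite_Bf[of f] by (intro Hantipode_fin) (auto intro: finite_subset)
  show "Hantipode F G lact ract \<sigma> \<tau> ` CC f = CC f"
  proof
    show "Hantipode F G lact ract \<sigma> \<tau> ` CC f \<subseteq> CC f"
    proof
      fix x assume "x \<in> Hantipode F G lact ract \<sigma> \<tau> ` CC f"
      then obtain c where c: "c \<in> CC f" "x = Hantipode F G lact ract \<sigma> \<tau> c" by auto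
      have "(\<Sum>i\<in>Bf f. sc (c i * acoef i) (bvec (psi i))) \<in> CC f"
      proof (intro V.subspace_sum[OF CC_subspace[OF f]] V.subspace_scale[OF CC_subspace[OF f]])
        fix i assume "i \<in> Bf f"
        then have "psi i \<in> Bf f" by (rule psiB)
        then show "bvec (psi i) \<in> CC f" by (auto simp: supp_def bvec_def)
      qed
      then show "x \<in> CC f" using c formula by simp
    qed
    show "CC f \<subseteq> Hantipode F G lact ract \<sigma> \<tau> ` CC f"
    proof
      fix c' :: "'g \<times> 'f \<Rightarrow> 'k" assume c': "c' \<in> CC f"
      define c where "c = (\<lambda>i. if i \<in> Bf f then c' (psi i) * inverse (acoef i) else 0)"
      have cC: "c \<in> CC f" by (auto simp: c_def supp_def)
      have "Hantipode F G lact ract \<sigma> \<tau> c = (\<Sum>i\<in>Bf f. sc (c' (psi i)) (bvec (psi i)))"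
        unfolding formula[OF cC]
      proof (intro sum.cong refl)
        fix i assume i: "i \<in> Bf f"
        then have "acoef i \<noteq> 0" using acoef_nz BfGF by auto
        then show "sc (c i * acoef i) (bvec (psi i)) = sc (c' (psi i)) (bvec (psi i))"
          using i by (simp add: c_def)
      qed
      also have "\<dots> = (\<Sum>q\<in>psi ` Bf f. sc (c' q) (bvec q))"
        by (rule sum.reindex[OF injB, symmetric, unfolded comp_def])
      also have "\<dots> = c'" unfolding psiBf using expand_bvec[OF finite_Bf, of c' f] c' by simp
      finally show "c' \<in> Hantipode F G lact ract \<sigma> \<tau> ` CC f" using cC by (metis image_eqI)
    qed
  qed
qed

end
end



context matched_pair
begin


lemma orb_one: "orb \<one>\<^bsub>F\<^esub> = {\<one>\<^bsub>F\<^esub>}"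
  using lact_oneF G.one_closed by (auto simp: orb_def)

lemma Bf_one: "Bf \<one>\<^bsub>F\<^esub> = carrier G \<times> {\<one>\<^bsub>F\<^esub>}"
  by (simp add: Bf_def orb_one)

definition phi :: "('g \<times> 'f \<Rightarrow> 'k) \<Rightarrow> 'g \<Rightarrow> 'k" where "phi x = (\<lambda>g. x (g, \<one>\<^bsub>F\<^esub>))"

lemma C1_in: assumes "x \<in> CC \<one>\<^bsub>F\<^esub>" "x (g, h) \<noteq> 0" shows "g \<in> carrier G" "h = \<one>\<^bsub>F\<^esub>"
proof -
  have "(g, h) \<in> Bf \<one>\<^bsub>F\<^esub>" by (rule CC_in[OF F.one_closed assms])
  then show "g \<in> carrier G" "h = \<one>\<^bsub>F\<^esub>" by (simp_all add: Bf_one)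
qed

lemma supp_C1: assumes x: "x \<in> CC \<one>\<^bsub>F\<^esub>" shows "supp x = (\<lambda>g. (g, \<one>\<^bsub>F\<^esub>)) ` supp (phi x)"
proof
  show "supp x \<subseteq> (\<lambda>g. (g, \<one>\<^bsub>F\<^esub>)) ` supp (phi x)"
  proof
    fix q assume q: "q \<in> supp x"
    obtain g h where gh: "q = (g, h)" by (cases q)
    have "x (g, h) \<noteq> 0" using q gh by (simp add: supp_def)
    then have "h = \<one>\<^bsub>F\<^esub>" "g \<in> supp (phi x)" using C1_in[OF x] by (auto simp: supp_def phi_def)
    then show "q \<in> (\<lambda>g. (g, \<one>\<^bsub>F\<^esub>)) ` supp (phi x)" using gh by simp
  qed
  show "(\<lambda>g. (g, \<one>\<^bsub>F\<^esub>)) ` supp (phi x) \<subseteq> supp x"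
    by (auto simp: supp_def phi_def)
qed

lemma supp_phi: assumes x: "x \<in> CC \<one>\<^bsub>F\<^esub>" shows "supp (phi x) \<subseteq> carrier G"
proof
  fix g assume "g \<in> supp (phi x)"
  then have "x (g, \<one>\<^bsub>F\<^esub>) \<noteq> 0" by (simp add: supp_def phi_def)
  then show "g \<in> carrier G" using C1_in[OF x] by simp
qed

lemma sum_C1: "(\<Sum>i\<in>carrier G \<times> {\<one>\<^bsub>F\<^esub>}. P i) = (\<Sum>g\<in>carrier G. P (g, \<one>\<^bsub>F\<^esub>))"
proof -
  have e: "carrier G \<times> {\<one>\<^bsub>F\<^esub>} = (\<lambda>g. (g, \<one>\<^bsub>F\<^esub>)) ` carrier G" by auto
  have "inj_on (\<lambda>g. (g, \<one>\<^bsub>F\<^esub>)) (carrier G)" by (simp add: inj_on_def)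
  then show ?thesis unfolding e by (simp add: sum.reindex)
qed

lemma sum_supp_C1: assumes x: "x \<in> CC \<one>\<^bsub>F\<^esub>"
  shows "(\<Sum>i\<in>supp x. P i) = (\<Sum>g\<in>supp (phi x). P (g, \<one>\<^bsub>F\<^esub>))"
proof -
  have "inj_on (\<lambda>g. (g, \<one>\<^bsub>F\<^esub>)) (supp (phi x))" by (simp add: inj_on_def)
  then show ?thesis unfolding supp_C1[OF x] by (simp add: sum.reindex)
qed

lemma Hunit_val: "Hunit F G j = (if fst j \<in> carrier G \<and> snd j = \<one>\<^bsub>F\<^esub> then 1 else 0)"
proof -
  obtain a b where j: "j = (a, b)" by (cases j)
  have "Hunit F G j = (\<Sum>g\<in>carrier G. if g = a then (if b = \<one>\<^bsub>F\<^esub> then 1 else 0) else 0)"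
    unfolding Hunit_def by (intro sum.cong refl) (auto simp: bvec_def j)
  also have "\<dots> = (if fst j \<in> carrier G \<and> snd j = \<one>\<^bsub>F\<^esub> then 1 else 0)"
    by (simp add: sum.delta' G_finite j)
  finally show ?thesis .
qed

lemma Hunit_C1: "(Hunit F G :: 'g \<times> 'f \<Rightarrow> 'k) \<in> CC \<one>\<^bsub>F\<^esub>"
proof -
  have "supp (Hunit F G :: 'g \<times> 'f \<Rightarrow> 'k) \<subseteq> Bf \<one>\<^bsub>F\<^esub>"
  proof
    fix j assume "j \<in> supp (Hunit F G :: 'g \<times> 'f \<Rightarrow> 'k)"
    then have "(Hunit F G :: 'g \<times> 'f \<Rightarrow> 'k) j \<noteq> 0" by (simp add: supp_def)
    then show "j \<in> Bf \<one>\<^bsub>F\<^esub>" by (cases j) (auto simp: Hunit_val Bf_one split: if_splits)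
  qed
  then show ?thesis by simp
qed

lemma Hmult_C1_val:
  assumes x: "x \<in> CC \<one>\<^bsub>F\<^esub>" and y: "y \<in> CC \<one>\<^bsub>F\<^esub>"
  shows "Hmult F G ract \<sigma> x y j = (\<Sum>g\<in>supp (phi x). \<Sum>g'\<in>supp (phi y).
      phi x g * phi y g' * ((if g = g' then 1 else 0) * bvec (g, \<one>\<^bsub>F\<^esub>) j))"
proof -
  have "Hmult F G ract \<sigma> x y j = (\<Sum>i\<in>supp x. \<Sum>i2\<in>supp y. x i * y i2 *
      ((if ract (fst i) (snd i) = fst i2 then \<sigma> (fst i) (snd i) (snd i2) else 0) * bvec (fst i, snd i \<otimes>\<^bsub>F\<^esub> snd i2) j))"
    unfolding Hmult_def bilin_ext_def by (simp add: case_prod_beta)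
  also have "\<dots> = (\<Sum>g\<in>supp (phi x). \<Sum>i2\<in>supp y. x (g, \<one>\<^bsub>F\<^esub>) * y i2 *
      ((if ract g \<one>\<^bsub>F\<^esub> = fst i2 then \<sigma> g \<one>\<^bsub>F\<^esub> (snd i2) else 0) * bvec (g, \<one>\<^bsub>F\<^esub> \<otimes>\<^bsub>F\<^esub> snd i2) j))"
    by (subst sum_supp_C1[OF x]) (simp cong: if_cong)
  also have "\<dots> = (\<Sum>g\<in>supp (phi x). \<Sum>g'\<in>supp (phi y). x (g, \<one>\<^bsub>F\<^esub>) * y (g', \<one>\<^bsub>F\<^esub>) *
      ((if ract g \<one>\<^bsub>F\<^esub> = g' then \<sigma> g \<one>\<^bsub>F\<^esub> \<one>\<^bsub>F\<^esub> else 0) * bvec (g, \<one>\<^bsub>F\<^esub> \<otimes>\<^bsub>F\<^esub> \<one>\<^bsub>F\<^esub>) j))"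
    by (intro sum.cong refl, subst sum_supp_C1[OF y]) (simp cong: if_cong)
  also have "\<dots> = (\<Sum>g\<in>supp (phi x). \<Sum>g'\<in>supp (phi y).
      phi x g * phi y g' * ((if g = g' then 1 else 0) * bvec (g, \<one>\<^bsub>F\<^esub>) j))"
  proof (intro sum.cong refl)
    fix g g' assume g: "g \<in> supp (phi x)"
    then have gG: "g \<in> carrier G" using supp_phi[OF x] by auto
    have "\<sigma> g \<one>\<^bsub>F\<^esub> \<one>\<^bsub>F\<^esub> = 1" using sigma_norm[OF gG F.one_closed F.one_closed] by simp
    then show "x (g, \<one>\<^bsub>F\<^esub>) * y (g', \<one>\<^bsub>F\<^esub>) *
      ((if ract g \<one>\<^bsub>F\<^esub> = g' then \<sigma> g \<one>\<^bsub>F\<^esub> \<one>\<^bsub>F\<^esub> else 0) * bvec (g, \<one>\<^bsub>F\<^esub> \<otimes>\<^bsub>F\<^esub> \<one>\<^bsub>F\<^esub>) j)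
      = phi x g * phi y g' * ((if g = g' then 1 else 0) * bvec (g, \<one>\<^bsub>F\<^esub>) j)"
      using gG by (cases "g = g'") (simp_all add: ract_one phi_def)
  qed
  finally show ?thesis .
qed

lemma Hmult_C1:
  assumes x: "x \<in> CC \<one>\<^bsub>F\<^esub>" and y: "y \<in> CC \<one>\<^bsub>F\<^esub>"
  shows "Hmult F G ract \<sigma> x y \<in> CC \<one>\<^bsub>F\<^esub>"
proof -
  have "supp (Hmult F G ract \<sigma> x y) \<subseteq> Bf \<one>\<^bsub>F\<^esub>"
  proof
    fix j assume "j \<in> supp (Hmult F G ract \<sigma> x y)"
    then have "Hmult F G ract \<sigma> x y j \<noteq> 0" by (simp add: supp_def)
    then obtain g where g: "g \<in> supp (phi x)" and
      "(\<Sum>g'\<in>supp (phi y). phi x g * phi y g' * ((if g = g' then 1 else 0) * bvec (g, \<one>\<^bsub>F\<^esub>) j)) \<noteq> 0"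
      unfolding Hmult_C1_val[OF x y] by (rule sum.not_neutral_contains_not_neutral)
    then obtain g' where "phi x g * phi y g' * ((if g = g' then 1 else 0) * bvec (g, \<one>\<^bsub>F\<^esub>) j) \<noteq> 0"
      by (meson sum.not_neutral_contains_not_neutral)
    then have "j = (g, \<one>\<^bsub>F\<^esub>)" by (simp add: bvec_def split: if_splits)
    then show "j \<in> Bf \<one>\<^bsub>F\<^esub>" using g supp_phi[OF x] by (auto simp: Bf_one)
  qed
  then show ?thesis by simp
qed

lemma psi_C1: "g \<in> carrier G \<Longrightarrow> psi (g, \<one>\<^bsub>F\<^esub>) = (inv\<^bsub>G\<^esub> g, \<one>\<^bsub>F\<^esub>)"
  by (simp add: psi_def ract_one lact_oneF)

lemma acoef_C1: "g \<in> carrier G \<Longrightarrow> acoef (g, \<one>\<^bsub>F\<^esub>) = 1"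
  using sigma_norm[of "inv\<^bsub>G\<^esub> g" "\<one>\<^bsub>F\<^esub>" "\<one>\<^bsub>F\<^esub>"] tau_norm[of "inv\<^bsub>G\<^esub> g" g "\<one>\<^bsub>F\<^esub>"]
  by (simp add: acoef_def lact_oneF)

lemma Hantipode_C1:
  assumes x: "x \<in> CC \<one>\<^bsub>F\<^esub>"
  shows "Hantipode F G lact ract \<sigma> \<tau> x = (\<Sum>g\<in>carrier G. sc (x (g, \<one>\<^bsub>F\<^esub>)) (bvec (inv\<^bsub>G\<^esub> g, \<one>\<^bsub>F\<^esub>)))"
proof -
  have "Hantipode F G lact ract \<sigma> \<tau> x = (\<Sum>i\<in>carrier G \<times> {\<one>\<^bsub>F\<^esub>}. sc (x i * acoef i) (bvec (psi i)))"
  proof (rule Hantipode_fin)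
    show "finite (supp x)" using CC_fs[OF F.one_closed x] by simp
    show "supp x \<subseteq> carrier G \<times> {\<one>\<^bsub>F\<^esub>}" using x by (simp add: Bf_one)
    show "finite (carrier G \<times> {\<one>\<^bsub>F\<^esub>})" using G_finite by simp
  qed
  also have "\<dots> = (\<Sum>g\<in>carrier G. sc (x (g, \<one>\<^bsub>F\<^esub>)) (bvec (inv\<^bsub>G\<^esub> g, \<one>\<^bsub>F\<^esub>)))"
    unfolding sum_C1 by (intro sum.cong refl) (simp add: psi_C1 acoef_C1)
  finally show ?thesis .
qed

lemma Hantipode_C1_in: assumes x: "x \<in> CC \<one>\<^bsub>F\<^esub>" shows "Hantipode F G lact ract \<sigma> \<tau> x \<in> CC \<one>\<^bsub>F\<^esub>"
  unfolding Hantipode_C1[OF x]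
proof (intro V.subspace_sum[OF CC_subspace[OF F.one_closed]] V.subspace_scale[OF CC_subspace[OF F.one_closed]])
  fix g assume "g \<in> carrier G"
  then show "bvec (inv\<^bsub>G\<^esub> g, \<one>\<^bsub>F\<^esub>) \<in> CC \<one>\<^bsub>F\<^esub>" by (auto simp: supp_def bvec_def Bf_one)
qed

lemma Hopf_C1: "Hopf_subalgebra F G lact ract \<sigma> \<tau> (CC \<one>\<^bsub>F\<^esub>)"
  unfolding Hopf_subalgebra_def
  using CC_SCo[OF F.one_closed] Hunit_C1 Hmult_C1 Hantipode_C1_in by blast

end



context matched_pair
begin

lemma phi_linear: "linear_on (CC \<one>\<^bsub>F\<^esub>) phi"
  by (simp add: linear_on_def phi_def)

lemma phi_bvec: "phi (bvec (g, \<one>\<^bsub>F\<^esub>)) = bvec g"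
  by (auto simp: phi_def bvec_def fun_eq_iff)

lemma phi_bij: "bij_betw phi (CC \<one>\<^bsub>F\<^esub>) (kGspace G :: ('g \<Rightarrow> 'k) set)"
  unfolding bij_betw_def
proof
  show "inj_on phi (CC \<one>\<^bsub>F\<^esub>)"
  proof (rule inj_onI)
    fix x y :: "'g \<times> 'f \<Rightarrow> 'k"
    assume x: "x \<in> CC \<one>\<^bsub>F\<^esub>" and y: "y \<in> CC \<one>\<^bsub>F\<^esub>" and e: "phi x = phi y"
    show "x = y"
    proof
      fix q :: "'g \<times> 'f"
      obtain g h where q: "q = (g, h)" by (cases q)
      show "x q = y q"
      proof (cases "h = \<one>\<^bsub>F\<^esub>")
        case True
        then show ?thesis using fun_cong[OF e, of g] q by (simp add: phi_def)
      next
        case False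
        then have "x (g, h) = 0" "y (g, h) = 0" using C1_in[OF x] C1_in[OF y] by blast+
        then show ?thesis using q by simp
      qed
    qed
  qed
  show "phi ` CC \<one>\<^bsub>F\<^esub> = kGspace G"
  proof
    show "phi ` CC \<one>\<^bsub>F\<^esub> \<subseteq> kGspace G"
    proof
      fix u assume "u \<in> phi ` CC \<one>\<^bsub>F\<^esub>"
      then obtain x where x: "x \<in> CC \<one>\<^bsub>F\<^esub>" "u = phi x" by auto
      then show "u \<in> kGspace G"
        using supp_phi[OF x(1)] G_finite by (auto simp: kGspace_def fin_fun_def intro: finite_subset)
    qed
    show "kGspace G \<subseteq> phi ` CC \<one>\<^bsub>F\<^esub>"
    proof
      fix u :: "'g \<Rightarrow> 'k" assume u: "u \<in> kGspace G"
      define x where "x = (\<lambda>q. if snd q = \<one>\<^bsub>F\<^esub> then u (fst q) else 0)"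
      have "x \<in> CC \<one>\<^bsub>F\<^esub>" using u by (auto simp: x_def supp_def Bf_one kGspace_def fin_fun_def split: if_splits)
      moreover have "phi x = u" by (simp add: x_def phi_def)
      ultimately show "u \<in> phi ` CC \<one>\<^bsub>F\<^esub>" by (metis image_eqI)
    qed
  qed
qed

lemma phi_mult:
  assumes x: "x \<in> CC \<one>\<^bsub>F\<^esub>" and y: "y \<in> CC \<one>\<^bsub>F\<^esub>"
  shows "phi (Hmult F G ract \<sigma> x y) = kGmult (phi x) (phi y)"
proof
  fix g0
  show "phi (Hmult F G ract \<sigma> x y) g0 = kGmult (phi x) (phi y) g0"
    unfolding phi_def[of "Hmult F G ract \<sigma> x y"] Hmult_C1_val[OF x y] kGmult_def bilin_ext_def
    by (intro sum.cong refl) (simp add: bvec_def)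
qed

lemma phi_unit: "phi (Hunit F G) = (kGunit G :: 'g \<Rightarrow> 'k)"
  by (auto simp: phi_def Hunit_def kGunit_def bvec_def fun_eq_iff)

lemma phi_counit:
  assumes x: "x \<in> CC \<one>\<^bsub>F\<^esub>"
  shows "kGcounit G (phi x) = Hcounit F G x"
  unfolding kGcounit_def Hcounit_def sum_supp_C1[OF x] by (simp add: phi_def)

lemma phi_antipode:
  assumes x: "x \<in> CC \<one>\<^bsub>F\<^esub>"
  shows "phi (Hantipode F G lact ract \<sigma> \<tau> x) = kGantipode G (phi x)"
proof
  fix g0
  have "phi (Hantipode F G lact ract \<sigma> \<tau> x) g0 = (\<Sum>g\<in>carrier G. phi x g * bvec (inv\<^bsub>G\<^esub> g) g0)"
    unfolding phi_def[of "Hantipode F G lact ract \<sigma> \<tau> x"] Hantipode_C1[OF x]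
    by (simp add: sum_fun_apply bvec_def phi_def)
  also have "\<dots> = (\<Sum>g\<in>supp (phi x). phi x g * bvec (inv\<^bsub>G\<^esub> g) g0)"
    using supp_phi[OF x] G_finite by (intro sum.mono_neutral_right) (auto simp: supp_def)
  also have "\<dots> = kGantipode G (phi x) g0"
    by (simp add: kGantipode_def lin_ext_def)
  finally show "phi (Hantipode F G lact ract \<sigma> \<tau> x) g0 = kGantipode G (phi x) g0" .
qed

lemma kGcomul_val:
  fixes u :: "'g \<Rightarrow> 'k"
  assumes u: "supp u \<subseteq> carrier G" "finite (supp u)"
  shows "kGcomul G u (a, b) = (if a \<in> carrier G \<and> b \<in> carrier G then u (a \<otimes>\<^bsub>G\<^esub> b) else 0)"
proof -
  have inner: "(\<Sum>y\<in>carrier G. tensor (bvec (g \<otimes>\<^bsub>G\<^esub> inv\<^bsub>G\<^esub> y)) (bvec y) (a, b))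
      = (if g = a \<otimes>\<^bsub>G\<^esub> b \<and> a \<in> carrier G \<and> b \<in> carrier G then 1 else (0::'k))" if g: "g \<in> carrier G" for g
  proof -
    have "(\<Sum>y\<in>carrier G. tensor (bvec (g \<otimes>\<^bsub>G\<^esub> inv\<^bsub>G\<^esub> y)) (bvec y) (a, b))
        = (\<Sum>y\<in>carrier G. if y = b then (if g \<otimes>\<^bsub>G\<^esub> inv\<^bsub>G\<^esub> b = a then 1 else 0) else (0::'k))"
      by (intro sum.cong refl) (auto simp: tensor_def bvec_def)
    also have "\<dots> = (if b \<in> carrier G \<and> g \<otimes>\<^bsub>G\<^esub> inv\<^bsub>G\<^esub> b = a then 1 else 0)"
      by (simp add: sum.delta' G_finite)
    also have "\<dots> = (if g = a \<otimes>\<^bsub>G\<^esub> b \<and> a \<in> carrier G \<and> b \<in> carrier G then 1 else 0)"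
      using G_div_iff[OF g] by auto
    finally show ?thesis .
  qed
  have "kGcomul G u (a, b) = (\<Sum>g\<in>supp u. u g * (\<Sum>y\<in>carrier G. tensor (bvec (g \<otimes>\<^bsub>G\<^esub> inv\<^bsub>G\<^esub> y)) (bvec y) (a, b)))"
    by (simp add: kGcomul_def lin_ext_def)
  also have "\<dots> = (\<Sum>g\<in>supp u. if g = a \<otimes>\<^bsub>G\<^esub> b then (if a \<in> carrier G \<and> b \<in> carrier G then u g else 0) else 0)"
    using u(1) by (intro sum.cong refl) (auto simp: inner)
  also have "\<dots> = (if a \<in> carrier G \<and> b \<in> carrier G then u (a \<otimes>\<^bsub>G\<^esub> b) else 0)"
    using u(2) by (auto simp: sum.delta' supp_def)
  finally show ?thesis .
qed

lemma phi_comul: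
  assumes x: "x \<in> CC \<one>\<^bsub>F\<^esub>"
  shows "kGcomul G (phi x) = tensor_map phi phi (Hcomul F G lact \<tau> x)"
proof
  fix ab :: "'g \<times> 'g"
  obtain a b where ab: "ab = (a, b)" by (cases ab)
  let ?T = "Hcomul F G lact \<tau> x"
  have fin: "finite (supp ?T)" using Hcomul_fin[OF F.one_closed x] .
  have "tensor_map phi phi ?T (a, b) = (\<Sum>p\<in>supp ?T. ?T p * (bvec (fst p) (a, \<one>\<^bsub>F\<^esub>) * bvec (snd p) (b, \<one>\<^bsub>F\<^esub>)))"
    by (simp add: tensor_map_def lin_ext_def case_prod_beta tensor_def phi_def)
  also have "\<dots> = (\<Sum>p\<in>supp ?T. if p = ((a, \<one>\<^bsub>F\<^esub>), (b, \<one>\<^bsub>F\<^esub>)) then ?T p else 0)"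
    by (intro sum.cong refl) (auto simp: bvec_def)
  also have "\<dots> = ?T ((a, \<one>\<^bsub>F\<^esub>), (b, \<one>\<^bsub>F\<^esub>))"
    using fin by (auto simp: sum.delta' supp_def)
  also have "\<dots> = Lop (b, \<one>\<^bsub>F\<^esub>) x (a, \<one>\<^bsub>F\<^esub>)"
    using Hcomul_coord CC_fs[OF F.one_closed x] by auto
  also have "\<dots> = (if a \<in> carrier G \<and> b \<in> carrier G then phi x (a \<otimes>\<^bsub>G\<^esub> b) else 0)"
    using tau_norm[of a b "\<one>\<^bsub>F\<^esub>"] by (auto simp: Lop_def lact_oneF phi_def)
  also have "\<dots> = kGcomul G (phi x) (a, b)"
  proof -
    have "finite (supp (phi x))" using supp_phi[OF x] G_finite by (rule finite_subset)
    then show ?thesis using kGcomul_val[of "phi x" a b] supp_phi[OF x] by simp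
  qed
  finally show "kGcomul G (phi x) ab = tensor_map phi phi ?T ab" using ab by simp
qed

end



theorem lemma4p1:
  fixes F :: "'f monoid" and G :: "'g monoid"
    and lact :: "'g \<Rightarrow> 'f \<Rightarrow> 'f" and ract :: "'g \<Rightarrow> 'f \<Rightarrow> 'g"
    and \<sigma> :: "'g \<Rightarrow> 'f \<Rightarrow> 'f \<Rightarrow> 'k::field_char_0"
    and \<tau> :: "'g \<Rightarrow> 'g \<Rightarrow> 'f \<Rightarrow> 'k"
  assumes alg_closed: "\<And>p :: 'k poly. degree p > 0 \<Longrightarrow> \<exists>x. poly p x = 0"
    and mp: "matched_pair F G lact ract \<sigma> \<tau>"
  shows
    "(\<forall>f\<in>carrier F.
        cosemisimple_subcoalgebra (Hspace F G) (Hcomul F G lact \<tau>) (Csub F G lact f))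
     \<and> Hopf_subalgebra F G lact ract \<sigma> \<tau> (Csub F G lact \<one>\<^bsub>F\<^esub>)
     \<and> cosemisimple_subcoalgebra (Hspace F G) (Hcomul F G lact \<tau>) (Csub F G lact \<one>\<^bsub>F\<^esub>)
     \<and> (\<exists>\<phi> :: ('g \<times> 'f \<Rightarrow> 'k) \<Rightarrow> 'g \<Rightarrow> 'k.
          linear_on (Csub F G lact \<one>\<^bsub>F\<^esub>) \<phi>
          \<and> (\<forall>g\<in>carrier G. \<phi> (bvec (g, \<one>\<^bsub>F\<^esub>)) = bvec g)
          \<and> bij_betw \<phi> (Csub F G lact \<one>\<^bsub>F\<^esub>) (kGspace G)
          \<and> (\<forall>x\<in>Csub F G lact \<one>\<^bsub>F\<^esub>. \<forall>y\<in>Csub F G lact \<one>\<^bsub>F\<^esub>.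
                \<phi> (Hmult F G ract \<sigma> x y) = kGmult (\<phi> x) (\<phi> y))
          \<and> \<phi> (Hunit F G) = kGunit G
          \<and> (\<forall>x\<in>Csub F G lact \<one>\<^bsub>F\<^esub>.
                kGcomul G (\<phi> x) = tensor_map \<phi> \<phi> (Hcomul F G lact \<tau> x))
          \<and> (\<forall>x\<in>Csub F G lact \<one>\<^bsub>F\<^esub>. kGcounit G (\<phi> x) = Hcounit F G x)
          \<and> (\<forall>x\<in>Csub F G lact \<one>\<^bsub>F\<^esub>.
                \<phi> (Hantipode F G lact ract \<sigma> \<tau> x) = kGantipode G (\<phi> x)))
     \<and> (\<forall>f\<in>carrier F. stabilizer G lact f = {\<one>\<^bsub>G\<^esub>} \<longrightarrow>
          simple_subcoalgebra (Hspace F G) (Hcomul F G lact \<tau>) (Csub F G lact f)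
          \<and> (Hantipode F G lact ract \<sigma> \<tau> ` Csub F G lact f = Csub F G lact f
              \<longleftrightarrow> inv_stabilizer F G lact f \<noteq> {}))"
proof -
  interpret matched_pair F G lact ract \<sigma> \<tau> by (rule mp)
  have nG: "(of_nat (card (carrier G)) :: 'k) \<noteq> 0"
  proof -
    have "card (carrier G) > 0" using G_finite G.one_closed card_gt_0_iff by blast
    then show ?thesis by simp
  qed
  have Ceq: "\<And>f. f \<in> carrier F \<Longrightarrow> (Csub F G lact f :: ('g \<times> 'f \<Rightarrow> 'k) set) = CC f"
    by (rule Csub_eq)
  have C1: "(Csub F G lact \<one>\<^bsub>F\<^esub> :: ('g \<times> 'f \<Rightarrow> 'k) set) = CC \<one>\<^bsub>F\<^esub>"
    by (rule Csub_eq[OF F.one_closed])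
  have P1: "\<forall>f\<in>carrier F. cosemisimple_subcoalgebra (Hspace F G) (Hcomul F G lact \<tau>) (Csub F G lact f)"
    using cosemisimple_CC[OF _ nG] Ceq by simp
  have P2: "Hopf_subalgebra F G lact ract \<sigma> \<tau> (Csub F G lact \<one>\<^bsub>F\<^esub>)"
    unfolding C1 by (rule Hopf_C1)
  have P3: "cosemisimple_subcoalgebra (Hspace F G) (Hcomul F G lact \<tau>) (Csub F G lact \<one>\<^bsub>F\<^esub>)"
    using P1 by simp
  have P4: "\<exists>\<phi> :: ('g \<times> 'f \<Rightarrow> 'k) \<Rightarrow> 'g \<Rightarrow> 'k.
          linear_on (Csub F G lact \<one>\<^bsub>F\<^esub>) \<phi>
          \<and> (\<forall>g\<in>carrier G. \<phi> (bvec (g, \<one>\<^bsub>F\<^esub>)) = bvec g)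
          \<and> bij_betw \<phi> (Csub F G lact \<one>\<^bsub>F\<^esub>) (kGspace G)
          \<and> (\<forall>x\<in>Csub F G lact \<one>\<^bsub>F\<^esub>. \<forall>y\<in>Csub F G lact \<one>\<^bsub>F\<^esub>.
                \<phi> (Hmult F G ract \<sigma> x y) = kGmult (\<phi> x) (\<phi> y))
          \<and> \<phi> (Hunit F G) = kGunit G
          \<and> (\<forall>x\<in>Csub F G lact \<one>\<^bsub>F\<^esub>.
                kGcomul G (\<phi> x) = tensor_map \<phi> \<phi> (Hcomul F G lact \<tau> x))
          \<and> (\<forall>x\<in>Csub F G lact \<one>\<^bsub>F\<^esub>. kGcounit G (\<phi> x) = Hcounit F G x)
          \<and> (\<forall>x\<in>Csub F G lact \<one>\<^bsub>F\<^esub>.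
                \<phi> (Hantipode F G lact ract \<sigma> \<tau> x) = kGantipode G (\<phi> x))"
    unfolding C1
    by (intro exI[of _ phi] conjI ballI phi_linear phi_bvec phi_bij phi_mult phi_unit phi_comul
        phi_counit phi_antipode)
  have P5: "\<forall>f\<in>carrier F. stabilizer G lact f = {\<one>\<^bsub>G\<^esub>} \<longrightarrow>
          simple_subcoalgebra (Hspace F G) (Hcomul F G lact \<tau>) (Csub F G lact f)
          \<and> (Hantipode F G lact ract \<sigma> \<tau> ` Csub F G lact f = Csub F G lact f
              \<longleftrightarrow> inv_stabilizer F G lact f \<noteq> {})"
  proof (intro ballI impI conjI)
    fix f assume f: "f \<in> carrier F" and st: "stabilizer G lact f = {\<one>\<^bsub>G\<^esub>}"
    show "simple_subcoalgebra (Hspace F G) (Hcomul F G lact \<tau>) (Csub F G lact f)"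
      unfolding Ceq[OF f] by (rule simple_CC[OF f st])
    have "inv_stabilizer F G lact f \<noteq> {} \<longleftrightarrow> (\<exists>y\<in>carrier G. lact y f = inv\<^bsub>F\<^esub> f)"
      by (auto simp: inv_stabilizer_def)
    then show "Hantipode F G lact ract \<sigma> \<tau> ` Csub F G lact f = Csub F G lact f
              \<longleftrightarrow> inv_stabilizer F G lact f \<noteq> {}"
      unfolding Ceq[OF f] using antipode_CC[OF f] by simp
  qed
  show ?thesis using P1 P2 P3 P4 P5 by blast
qed



end
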